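(* Let $I=[x_1,x_N]$ with partition $x_1<\dots<x_N$ and affine maps $u_i(x)=a_ix+b_i$ with $u_i(x_1)=x_i$, $u_i(x_N)=x_{i+1}$ ($i\in\mathbb{N}_{N-1}$). Let $\{f_k\}_{k\ge1}$ be a sequence of positive functions in $C(I)$ converging in sup-norm to $f\in C(I)$, and let $\{q_n\}_{n\ge1}$ be a sequence in $(0,1]$ with $\lim q_n=1$. For $k,n\in\mathbb{N}$ let $f^{(q_n,\alpha)}_{k,n}$ be the quantum MKZ-fractal function of $f_k$ with parameter $q_n$, i.e. the unique $g\in C(I)$ with $g(u_i(x))=f_k(u_i(x))+\alpha_i(x)(g(x)-M_{n,q_n}f_k(x))$ for all $x\in I$, $i\in\mathbb{N}_{N-1}$. Set $\phi(f_k,i)=\min_{x\in I}f_k(u_i(x))$, $\Phi(f_k,i)=\max_{x\in I}f_k(u_i(x))$, $\phi_{n,k}(f_k)=\min_{x\in I}M_{n,q_n}f_k(x)$, $\Phi_{n,k}(f_k)=\max_{x\in I}M_{n,q_n}f_k(x)$, and let $C^\dagger_{n,k}$ be a positive real number strictly greater than $\max\{\phi_{n,k}(f_k),\|f_k\|_\infty\}$. Suppose the continuous scaling functions satisfy (1) $\|\alpha_i\|_\infty<1$ for all $i$ and (2) for all $k,n\in\mathbb{N}$, $i\in\mathbb{N}_{N-1}$, $x\in I$: \[ \max\left\{\frac{-\phi(f_k,i)}{C^\dagger_{n,k}-\phi_{n,k}(f_k)},-\frac{C^\dagger_{n,k}-\Phi(f_k,i)}{\Phi_{n,k}(f_k)}\right\}\le\alpha_i(x)\le\min\left\{\frac{\phi(f_k,i)}{\Phi_{n,k}(f_k)},\frac{C^\dagger_{n,k}-\Phi(f_k,i)}{C^\dagger_{n,k}-\phi_{n,k}(f_k)}\right\}.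 \] Then every $f^{(q_n,\alpha)}_{k,n}$ is positive on $I$, and the double sequence $\{\{f^{(q_n,\alpha)}_{k,n}\}_n\}_k$ converges to $f$ in sup-norm, i.e. for every $\varepsilon>0$ there is $k_0$ with $\|f^{(q_n,\alpha)}_{k,n}-f\|_\infty<\varepsilon$ for all $k,n\ge k_0$.
   Context: A function is called positive if it is $\ge0$ on $I$. For $q\in(0,1]$: $[k]_q=\frac{1-q^k}{1-q}$ ($q\ne1$), $[k]_1=k$, $q$-factorials, $\binom{n}{k}_q=\frac{[n]_q!}{[k]_q![n-k]_q!}$. Quantum MKZ operator: $M_{n,q}h(x)=P_{n,q}(x)\sum_{k\ge0}\binom{n+k}{k}_q\left(\frac{x-x_1}{x_N-x_1}\right)^k h\!\left(x_1+(x_N-x_1)\frac{[k]_q}{[k+n]_q}\right)$ for $x_1\le x<x_N$, $M_{n,q}h(x_N)=h(x_N)$, $P_{n,q}(x)=\prod_{j=0}^n(x_N-x_1-q^j(x-x_1))/(x_N-x_1)^{n+1}$. $\|\alpha\|_\infty=\max_i\|\alpha_i\|_\infty$. *)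

theory Defs
  imports "HOL-Analysis.Analysis"
begin

definition qint :: "real \<Rightarrow> nat \<Rightarrow> real" where
  "qint q k = (if q = 1 then real k else (1 - q ^ k) / (1 - q))"

definition qfact :: "real \<Rightarrow> nat \<Rightarrow> real" where
  "qfact q n = (\<Prod>j=1..n. qint q j)"

definition qbinom :: "real \<Rightarrow> nat \<Rightarrow> nat \<Rightarrow> real" where
  "qbinom q n k = qfact q n / (qfact q k * qfact q (n - k))"

definition supnorm :: "real set \<Rightarrow> (real \<Rightarrow> real) \<Rightarrow> real" where
  "supnorm S g = (SUP x\<in>S. \<bar>g x\<bar>)"

definition PMKZ :: "real \<Rightarrow> real \<Rightarrow> nat \<Rightarrow> real \<Rightarrow> real \<Rightarrow> real" where
  "PMKZ x1 xN n q x = (\<Prod>j=0..n. (xN - x1 - q ^ j * (x - x1))) / (xN - x1) ^ (n + 1)"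

definition MKZ :: "real \<Rightarrow> real \<Rightarrow> nat \<Rightarrow> real \<Rightarrow> (real \<Rightarrow> real) \<Rightarrow> real \<Rightarrow> real" where
  "MKZ x1 xN n q h x =
     (if x = xN then h xN
      else PMKZ x1 xN n q x *
        (\<Sum>k. qbinom q (n + k) k * ((x - x1) / (xN - x1)) ^ k *
               h (x1 + (xN - x1) * qint q k / qint q (k + n))))"

text \<open>Quantum MKZ fractal function of h with parameter q: the unique continuous g on
  I = [x 1, x N] satisfying the self-referential equation; outside I it is normalised to 0
  so that it is unique as a HOL function.\<close>
definition qfractal ::
  "(nat \<Rightarrow> real) \<Rightarrow> nat \<Rightarrow> (nat \<Rightarrow> real) \<Rightarrow> (nat \<Rightarrow> real) \<Rightarrow> (nat \<Rightarrow> real \<Rightarrow> real)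
    \<Rightarrow> nat \<Rightarrow> real \<Rightarrow> (real \<Rightarrow> real) \<Rightarrow> (real \<Rightarrow> real)" where
  "qfractal x N a b \<alpha> n q h =
     (THE g. continuous_on {x 1..x N} g \<and> (\<forall>y. y \<notin> {x 1..x N} \<longrightarrow> g y = 0) \<and>
        (\<forall>i\<in>{1..N-1}. \<forall>y\<in>{x 1..x N}.
           g (a i * y + b i) = h (a i * y + b i) + \<alpha> i y * (g y - MKZ (x 1) (x N) n q h y)))"

end

theory Submission
  imports Defs
begin
lemma qint_0[simp]: "qint q 0 = 0" by (simp add: qint_def)

lemma qint_Suc: "qint q (Suc k) = 1 + q * qint q k"
  by (cases "q = 1") (auto simp: qint_def field_simps)

lemma qint_sum: "qint q k = (\<Sum>j<k. q ^ j)"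
proof (induction k)
  case (Suc k)
  have "(\<Sum>j<Suc k. q ^ j) = 1 + q * (\<Sum>j<k. q ^ j)"
    by (subst sum.lessThan_Suc_shift) (simp add: sum_distrib_left)
  then show ?case using Suc by (simp add: qint_Suc)
qed simp

lemma qint_add: "qint q (m + k) = qint q k + q ^ k * qint q m"
  by (induction k) (auto simp: qint_Suc algebra_simps)

lemma qint_nonneg: "0 \<le> q \<Longrightarrow> 0 \<le> qint q k"
  by (auto simp: qint_sum intro!: sum_nonneg)

lemma qint_ge1: "0 \<le> q \<Longrightarrow> 1 \<le> k \<Longrightarrow> 1 \<le> qint q k"
  using qint_Suc[of q "k - 1"] qint_nonneg[of q "k-1"] by simp

lemma qint_pos: "0 \<le> q \<Longrightarrow> 1 \<le> k \<Longrightarrow> 0 < qint q k"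
  using qint_ge1[of q k] by simp

lemma qint_mono: "0 \<le> q \<Longrightarrow> k \<le> m \<Longrightarrow> qint q k \<le> qint q m"
  using qint_add[of q "m - k" k] qint_nonneg[of q "m-k"] by simp

lemma qint_le: "0 \<le> q \<Longrightarrow> q \<le> 1 \<Longrightarrow> qint q k \<le> real k"
proof -
  assume "0 \<le> q" "q \<le> 1"
  then have "(\<Sum>j<k. q ^ j) \<le> (\<Sum>j<k. 1)" by (intro sum_mono) (simp add: power_le_one)
  then show ?thesis by (simp add: qint_sum)
qed

lemma qint_ge_pow: "0 \<le> q \<Longrightarrow> q \<le> 1 \<Longrightarrow> real (Suc k) * q ^ k \<le> qint q (Suc k)"
proof -
  assume "0 \<le> q" "q \<le> 1"
  then have "(\<Sum>j<Suc k. q ^ k) \<le> (\<Sum>j<Suc k. q ^ j)"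
    by (intro sum_mono) (auto intro: power_decreasing)
  then show ?thesis by (simp add: qint_sum)
qed

lemma qfact_Suc: "qfact q (Suc n) = qfact q n * qint q (Suc n)"
  by (simp add: qfact_def)

lemma qfact_0[simp]: "qfact q 0 = 1" by (simp add: qfact_def)

lemma qfact_pos: "0 \<le> q \<Longrightarrow> 0 < qfact q n"
  by (induction n) (auto simp: qfact_Suc qint_pos)

definition ck :: "real \<Rightarrow> nat \<Rightarrow> nat \<Rightarrow> real" where
  "ck q n k = qbinom q (n + k) k"

lemma ck_alt: "ck q n k = qfact q (n + k) / (qfact q k * qfact q n)"
  by (simp add: ck_def qbinom_def)

lemma ck_pos: "0 \<le> q \<Longrightarrow> 0 < ck q n k"
  by (simp add: ck_alt qfact_pos)

lemma ck_n0[simp]: "0 \<le> q \<Longrightarrow> ck q n 0 = 1"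
  using qfact_pos[of q n] by (simp add: ck_alt)

lemma ck_0k[simp]: "0 \<le> q \<Longrightarrow> ck q 0 k = 1"
  using qfact_pos[of q k] by (simp add: ck_alt)

lemma ck_shift1:
  assumes "0 \<le> q"
  shows "ck q n (Suc k) * qint q (Suc k) / qint q (Suc k + n) = ck q n k"
proof -
  have a: "0 < qint q (Suc k)" "0 < qint q (Suc (n + k))" using qint_pos assms by auto
  have f: "0 < qfact q k" "0 < qfact q n" "0 < qfact q (n+k)" using qfact_pos assms by auto
  have l: "ck q n (Suc k) = qfact q (n+k) * qint q (Suc (n+k)) / (qfact q k * qint q (Suc k) * qfact q n)"
    by (simp add: ck_alt qfact_Suc)
  have s: "Suc k + n = Suc (n+k)" by simp
  show ?thesis unfolding l s ck_alt using a f
    by (simp add: field_simps qfact_Suc)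
qed

lemma ck_pascal:
  assumes "0 \<le> q"
  shows "ck q (Suc n) (Suc k) = ck q n (Suc k) + q ^ Suc n * ck q (Suc n) k"
proof -
  have a: "0 < qint q (Suc k)" "0 < qint q (Suc n)" "0 < qint q (Suc (Suc (n + k)))"
    using qint_pos assms by auto
  have f: "0 < qfact q k" "0 < qfact q n" "0 < qfact q (Suc (n+k))" using qfact_pos assms by auto
  have e: "qint q (Suc (Suc (n + k))) = qint q (Suc n) + q ^ Suc n * qint q (Suc k)"
  proof -
    have "Suc (Suc (n + k)) = Suc k + Suc n" by simp
    then show ?thesis using qint_add[of q "Suc k" "Suc n"] by metis
  qed
  have l: "ck q (Suc n) (Suc k) = qfact q (Suc (n+k)) * qint q (Suc (Suc (n + k))) /
        (qfact q k * qint q (Suc k) * (qfact q n * qint q (Suc n)))"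
    by (simp add: ck_alt qfact_Suc)
  have r1: "ck q n (Suc k) = qfact q (Suc (n+k)) / (qfact q k * qint q (Suc k) * qfact q n)"
    by (simp add: ck_alt qfact_Suc)
  have r2: "ck q (Suc n) k = qfact q (Suc (n+k)) / (qfact q k * (qfact q n * qint q (Suc n)))"
    by (simp add: ck_alt qfact_Suc)
  show ?thesis unfolding l r1 r2 e using a f
    by (simp add: field_simps)
qed

definition Pq :: "real \<Rightarrow> nat \<Rightarrow> real \<Rightarrow> real" where
  "Pq q n t = (\<Prod>j=0..n. (1 - q ^ j * t))"

lemma Pq_Suc: "Pq q (Suc n) t = Pq q n t * (1 - q ^ Suc n * t)"
  by (simp add: Pq_def)

lemma Pq_nonneg: "0 \<le> q \<Longrightarrow> q \<le> 1 \<Longrightarrow> 0 \<le> t \<Longrightarrow> t \<le> 1 \<Longrightarrow> 0 \<le> Pq q n t"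
  unfolding Pq_def
  by (intro prod_nonneg) (auto simp: mult_le_one power_le_one)

lemma genfun:
  assumes q: "0 \<le> q" "q \<le> 1" and t: "0 \<le> t" "t < 1"
  shows "summable (\<lambda>k. ck q n k * t ^ k) \<and> Pq q n t * (\<Sum>k. ck q n k * t ^ k) = 1"
proof (induction n)
  case 0
  have "summable (\<lambda>k. t ^ k)" using t by (intro summable_geometric) simp
  moreover have "(\<Sum>k. t ^ k) = 1 / (1 - t)" using t by (intro suminf_geometric) simp
  ultimately show ?case using q t by (simp add: Pq_def)
next
  case (Suc n)
  define a where "a k = ck q (Suc n) k * t ^ k" for k
  define b where "b k = ck q n k * t ^ k" for k
  define r where "r = q ^ Suc n * t"
  have r: "0 \<le> r" "r < 1" using q t unfolding r_def
  proof -
    have "q ^ Suc n \<le> 1" using q by (intro power_le_one) auto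
    then have "q ^ Suc n * t \<le> 1 * t" using t by (intro mult_right_mono) auto
    then show "0 \<le> q ^ Suc n * t" "q ^ Suc n * t < 1" using q t by auto
  qed
  have sb: "summable b" and Pb: "Pq q n t * suminf b = 1" using Suc unfolding b_def by auto
  have a0: "a 0 = 1" "b 0 = 1" using q by (auto simp: a_def b_def)
  have rec: "a (Suc k) = b (Suc k) + r * a k" for k
    unfolding a_def b_def r_def using ck_pascal[OF q(1), of n k] by (simp add: algebra_simps)
  have an: "0 \<le> a k" "0 \<le> b k" for k
    unfolding a_def b_def using ck_pos[OF q(1), of "Suc n" k] ck_pos[OF q(1), of n k] t by auto
  have bs: "(\<Sum>k\<le>K. b (Suc k)) \<le> suminf b" for K
  proof -
    have "(\<Sum>k\<le>K. b (Suc k)) \<le> (\<Sum>k. b (Suc k))"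
      using sb an by (intro sum_le_suminf) (auto simp: summable_Suc_iff)
    also have "\<dots> = suminf b - b 0" using suminf_split_head[OF sb] .
    finally show ?thesis using an(2)[of 0] by linarith
  qed
  have part: "(\<Sum>k\<le>K. a k) \<le> (1 + suminf b) / (1 - r)" for K
  proof (induction K)
    case 0 then show ?case using a0 r an(2)[of "Suc 0"] bs[of 0] by (simp add: field_simps)
  next
    case (Suc K)
    have "(\<Sum>k\<le>Suc K. a k) = a 0 + (\<Sum>k\<le>K. a (Suc k))" by (rule sum.atMost_Suc_shift)
    also have "\<dots> = 1 + (\<Sum>k\<le>K. b (Suc k)) + r * (\<Sum>k\<le>K. a k)"
      by (simp add: rec a0 sum.distrib sum_distrib_left)
    also have "\<dots> \<le> 1 + suminf b + r * ((1 + suminf b) / (1 - r))"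
      using bs Suc r by (intro add_mono mult_left_mono) auto
    also have "\<dots> = (1 + suminf b) / (1 - r)" using r by (simp add: field_simps)
    finally show ?case .
  qed
  have sa: "summable a" by (rule bounded_imp_summable[OF an(1) part])
  have "suminf a = a 0 + (\<Sum>k. a (Suc k))" using suminf_split_head[OF sa] by simp
  also have "(\<Sum>k. a (Suc k)) = (\<Sum>k. b (Suc k)) + r * suminf a"
  proof -
    have s1: "summable (\<lambda>k. b (Suc k))" using sb by (simp add: summable_Suc_iff)
    have s2: "summable (\<lambda>k. r * a k)" using sa by (rule summable_mult)
    show ?thesis unfolding rec suminf_add[OF s1 s2, symmetric] suminf_mult[OF sa] ..
  qed
  also have "(\<Sum>k. b (Suc k)) = suminf b - 1" using suminf_split_head[OF sb] a0 by simp
  finally have e: "suminf a = a 0 + (suminf b - 1 + r * suminf a)" .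
  have "suminf a * (1 - r) = suminf a - r * suminf a" by (simp add: algebra_simps)
  then have e2: "suminf a * (1 - r) = suminf b" using e a0 by linarith
  have "Pq q (Suc n) t * suminf a = Pq q n t * (suminf a * (1 - r))"
    by (simp add: Pq_Suc r_def)
  then have "Pq q (Suc n) t * suminf a = 1" using Pb e2 by simp
  then show ?case using sa unfolding a_def by simp
qed

definition wt :: "real \<Rightarrow> nat \<Rightarrow> real \<Rightarrow> nat \<Rightarrow> real" where
  "wt q n t k = Pq q n t * (ck q n k * t ^ k)"

definition nd :: "real \<Rightarrow> nat \<Rightarrow> nat \<Rightarrow> real" where
  "nd q n k = qint q k / qint q (k + n)"

context
  fixes q :: real and n :: nat and t :: real
  assumes q: "0 < q" "q \<le> 1" and n: "1 \<le> n" and t: "0 \<le> t" "t < 1"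
begin

lemma wt_nonneg: "0 \<le> wt q n t k"
  unfolding wt_def using Pq_nonneg[of q t n] q t ck_pos[of q n k] by auto

lemma wt_summable: "summable (wt q n t)"
  unfolding wt_def using genfun[of q t n] q t by (auto intro: summable_mult)

lemma wt_sum: "(\<Sum>k. wt q n t k) = 1"
  unfolding wt_def using genfun[of q t n] q t by (subst suminf_mult) auto

lemma nd_0[simp]: "nd q n 0 = 0" by (simp add: nd_def)

lemma nd_nonneg: "0 \<le> nd q n k"
  unfolding nd_def using qint_nonneg[of q] q by auto

lemma nd_le1: "nd q n k \<le> 1"
proof -
  have "0 < qint q (k + n)" using qint_pos[of q "k+n"] q n by auto
  moreover have "qint q k \<le> qint q (k + n)" using qint_mono[of q k "k+n"] q by auto
  ultimately show ?thesis unfolding nd_def by simp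
qed

lemma wt_nd_Suc: "wt q n t (Suc k) * nd q n (Suc k) = t * wt q n t k"
proof -
  have "wt q n t (Suc k) * nd q n (Suc k) =
        Pq q n t * t * (ck q n (Suc k) * qint q (Suc k) / qint q (Suc k + n)) * t ^ k"
    by (simp add: wt_def nd_def)
  also have "\<dots> = t * wt q n t k" using ck_shift1[of q n k] q by (simp add: wt_def)
  finally show ?thesis .
qed

lemma wtnd_summable: "summable (\<lambda>k. wt q n t k * nd q n k)"
proof -
  have "summable (\<lambda>k. wt q n t (Suc k) * nd q n (Suc k))"
    unfolding wt_nd_Suc using wt_summable by (rule summable_mult)
  then show ?thesis by (subst (asm) summable_Suc_iff)
qed

lemma wtnd_sum: "(\<Sum>k. wt q n t k * nd q n k) = t"
proof -
  have "(\<Sum>k. wt q n t (Suc k) * nd q n (Suc k)) = (\<Sum>k. wt q n t k * nd q n k) - 0"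
    using suminf_split_head[OF wtnd_summable] by simp
  moreover have "(\<Sum>k. wt q n t (Suc k) * nd q n (Suc k)) = t"
    unfolding wt_nd_Suc using suminf_mult[OF wt_summable, of t] wt_sum by simp
  ultimately show ?thesis by simp
qed

lemma nd_step: "nd q n (Suc (Suc k)) \<le> 1 / qint q (Suc n) + nd q n (Suc k)"
proof -
  define A' where "A' = qint q (Suc k)"
  define B where "B = qint q (Suc (Suc k) + n)"
  define B' where "B' = qint q (Suc k + n)"
  have A: "qint q (Suc (Suc k)) = 1 + q * A'" unfolding A'_def by (rule qint_Suc)
  have pos: "0 < qint q (Suc n)" "0 < B'" "0 \<le> A'"
    unfolding B'_def A'_def using qint_pos[of q] qint_nonneg[of q] q by auto
  have B1: "qint q (Suc n) \<le> B" unfolding B_def using qint_mono[of q "Suc n"] q by auto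
  have B2: "B' \<le> B" unfolding B_def B'_def using qint_mono[of q] q by auto
  have "nd q n (Suc (Suc k)) = 1 / B + q * A' / B" unfolding nd_def A B_def by (simp add: add_divide_distrib)
  also have "1 / B \<le> 1 / qint q (Suc n)" using pos B1 by (intro divide_left_mono) auto
  also have "q * A' / B \<le> A' / B'"
  proof -
    have "q * A' \<le> A'" using q pos by (simp add: mult_left_le_one_le)
    then have "q * A' / B \<le> A' / B" using pos B2 by (intro divide_right_mono) auto
    also have "\<dots> \<le> A' / B'" using pos B2 by (intro divide_left_mono) auto
    finally show ?thesis .
  qed
  finally show ?thesis unfolding nd_def A'_def B'_def by simp
qed

lemma nd_1: "nd q n (Suc 0) = 1 / qint q (Suc n)"
  by (simp add: nd_def qint_Suc)

lemma wtnd2_summable: "summable (\<lambda>k. wt q n t k * (nd q n k)\<^sup>2)"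
proof (rule summable_comparison_test'[OF wt_summable])
  fix k :: nat
  have "(nd q n k)\<^sup>2 \<le> 1" using nd_nonneg nd_le1 by (simp add: power_le_one)
  then show "norm (wt q n t k * (nd q n k)\<^sup>2) \<le> wt q n t k"
    using wt_nonneg[of k] mult_left_mono[of "(nd q n k)\<^sup>2" 1 "wt q n t k"] by simp
qed

lemma wtnd2_sum: "(\<Sum>k. wt q n t k * (nd q n k)\<^sup>2) \<le> t / qint q (Suc n) + t\<^sup>2"
proof -
  define c where "c = 1 / qint q (Suc n)"
  have c: "0 < c" unfolding c_def using qint_pos[of q "Suc n"] q by auto
  define f where "f k = wt q n t k * (nd q n k)\<^sup>2" for k
  define g where "g k = wt q n t k * nd q n k" for k
  have sf: "summable f" using wtnd2_summable unfolding f_def .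
  have sg: "summable g" using wtnd_summable unfolding g_def .
  have "suminf f = (\<Sum>k. f (k + 2)) + (\<Sum>i<2. f i)" by (rule suminf_split_initial_segment[OF sf])
  also have "(\<Sum>i<2. f i) = c * g 1"
    by (simp add: f_def g_def nd_1 c_def power2_eq_square numeral_2_eq_2)
  also have "(\<Sum>k. f (k + 2)) \<le> (\<Sum>k. c * g (k + 2) + t\<^sup>2 * wt q n t k)"
  proof (rule suminf_le)
    fix k
    have e: "wt q n t (Suc (Suc k)) * nd q n (Suc (Suc k)) * nd q n (Suc k) = t\<^sup>2 * wt q n t k"
      using wt_nd_Suc[of "Suc k"] wt_nd_Suc[of k] by (simp add: power2_eq_square)
    have "f (k + 2) = g (k+2) * nd q n (Suc (Suc k))"
      by (simp add: f_def g_def power2_eq_square numeral_2_eq_2)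
    also have "\<dots> \<le> g (k+2) * (c + nd q n (Suc k))"
      using nd_step[of k] wt_nonneg nd_nonneg unfolding c_def g_def
      by (intro mult_left_mono) auto
    also have "\<dots> = c * g (k + 2) + t\<^sup>2 * wt q n t k"
      using e by (simp add: g_def numeral_2_eq_2 algebra_simps)
    finally show "f (k + 2) \<le> c * g (k + 2) + t\<^sup>2 * wt q n t k" .
  next
    show "summable (\<lambda>k. f (k + 2))" using sf summable_iff_shift[of f 2] by blast
    show "summable (\<lambda>k. c * g (k + 2) + t\<^sup>2 * wt q n t k)"
      using sg wt_summable summable_iff_shift[of g 2] by (intro summable_add summable_mult) auto
  qed
  also have "(\<Sum>k. c * g (k + 2) + t\<^sup>2 * wt q n t k) = c * (\<Sum>k. g (k + 2)) + t\<^sup>2"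
  proof -
    have s1: "summable (\<lambda>k. g (k + 2))" using sg summable_iff_shift[of g 2] by blast
    show ?thesis
      using suminf_add[OF summable_mult[OF s1, of c] summable_mult[OF wt_summable, of "t\<^sup>2"]]
        suminf_mult[OF s1, of c] suminf_mult[OF wt_summable, of "t\<^sup>2"] wt_sum by simp
  qed
  also have "(\<Sum>k. g (k + 2)) = suminf g - g 1"
    using suminf_split_initial_segment[OF sg, of 2] by (simp add: g_def numeral_2_eq_2)
  finally have "suminf f \<le> c * suminf g + t\<^sup>2" by (simp add: algebra_simps)
  then show ?thesis unfolding f_def g_def c_def wtnd_sum by simp
qed

lemma var_bound: "summable (\<lambda>k. wt q n t k * (nd q n k - t)\<^sup>2) \<and>
    (\<Sum>k. wt q n t k * (nd q n k - t)\<^sup>2) \<le> 1 / qint q (Suc n)"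
proof -
  have e: "wt q n t k * (nd q n k - t)\<^sup>2 =
      wt q n t k * (nd q n k)\<^sup>2 - 2 * t * (wt q n t k * nd q n k) + t\<^sup>2 * wt q n t k" for k
    by (simp add: power2_eq_square algebra_simps)
  have s1: "summable (\<lambda>k. wt q n t k * (nd q n k)\<^sup>2 - 2 * t * (wt q n t k * nd q n k))"
    using wtnd2_summable wtnd_summable by (intro summable_diff summable_mult)
  have s: "summable (\<lambda>k. wt q n t k * (nd q n k)\<^sup>2 - 2 * t * (wt q n t k * nd q n k) + t\<^sup>2 * wt q n t k)"
    using s1 wt_summable by (intro summable_add summable_mult)
  have "(\<Sum>k. wt q n t k * (nd q n k - t)\<^sup>2) =
     (\<Sum>k. wt q n t k * (nd q n k)\<^sup>2) - 2 * t * t + t\<^sup>2"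
    unfolding e suminf_add[OF s1 summable_mult[OF wt_summable], symmetric]
      suminf_diff[OF wtnd2_summable summable_mult[OF wtnd_summable], symmetric]
      suminf_mult[OF wtnd_summable] suminf_mult[OF wt_summable] wt_sum wtnd_sum by simp
  also have "\<dots> \<le> t / qint q (Suc n)" using wtnd2_sum by (simp add: power2_eq_square)
  also have "\<dots> \<le> 1 / qint q (Suc n)"
    using t qint_pos[of q "Suc n"] q by (intro divide_right_mono) auto
  finally show ?thesis using s unfolding e by simp
qed

lemma wt_bounded_summable:
  assumes "\<And>k. \<bar>v k\<bar> \<le> H" shows "summable (\<lambda>k. wt q n t k * v k)"
proof (rule summable_comparison_test'[OF summable_mult[OF wt_summable, of H]])
  fix k
  have "wt q n t k * \<bar>v k\<bar> \<le> wt q n t k * H" using wt_nonneg[of k] assms[of k] by (rule mult_left_mono[rotated])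
  then show "norm (wt q n t k * v k) \<le> H * wt q n t k" using wt_nonneg[of k] by (simp add: abs_mult mult.commute)
qed

end

lemma node_bounds:
  fixes lo hi s :: real
  assumes "0 \<le> s" "s \<le> 1" "lo < hi"
  shows "lo \<le> lo + (hi - lo) * s" "lo + (hi - lo) * s \<le> hi"
proof -
  have "(hi - lo) * s \<le> (hi - lo) * 1" using assms by (intro mult_left_mono) auto
  then show "lo + (hi - lo) * s \<le> hi" by simp
  show "lo \<le> lo + (hi - lo) * s" using assms by simp
qed

lemma wt_abs_le:
  assumes q: "0 < q" "q \<le> 1" and n: "1 \<le> n" and t: "0 \<le> t" "t < 1"
    and le: "\<And>k. \<bar>v k\<bar> \<le> u k" and su: "summable (\<lambda>k. wt q n t k * u k)"
  shows "summable (\<lambda>k. wt q n t k * v k)" "\<bar>\<Sum>k. wt q n t k * v k\<bar> \<le> (\<Sum>k. wt q n t k * u k)"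
proof -
  have w: "0 \<le> wt q n t k" for k using wt_nonneg[OF q n t] .
  have a: "\<bar>wt q n t k * v k\<bar> \<le> wt q n t k * u k" for k
    using w[of k] le[of k] by (simp add: abs_mult mult_left_mono)
  have sa: "summable (\<lambda>k. \<bar>wt q n t k * v k\<bar>)"
    by (rule summable_comparison_test'[OF su]) (use a in auto)
  then show "summable (\<lambda>k. wt q n t k * v k)" by (rule summable_rabs_cancel)
  have "\<bar>\<Sum>k. wt q n t k * v k\<bar> \<le> (\<Sum>k. \<bar>wt q n t k * v k\<bar>)" by (rule summable_rabs[OF sa])
  also have "\<dots> \<le> (\<Sum>k. wt q n t k * u k)" by (rule suminf_le[OF a sa su])
  finally show "\<bar>\<Sum>k. wt q n t k * v k\<bar> \<le> (\<Sum>k. wt q n t k * u k)" .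
qed

lemma PMKZ_eq:
  assumes "lo < hi"
  shows "PMKZ lo hi n q y = Pq q n ((y - lo) / (hi - lo))"
proof -
  define L where "L = hi - lo"
  have L: "L > 0" using assms by (simp add: L_def)
  have "(\<Prod>j=0..n. (hi - lo - q ^ j * (y - lo))) = (\<Prod>j=0..n. L * (1 - q ^ j * ((y - lo) / L)))"
    using L by (intro prod.cong) (auto simp: L_def field_simps)
  also have "\<dots> = L ^ (n + 1) * Pq q n ((y - lo) / L)"
    by (simp add: prod.distrib Pq_def)
  finally show ?thesis using L by (simp add: PMKZ_def L_def)
qed

lemma MKZ_repr:
  assumes lohi: "lo < hi" and q: "0 < q" "q \<le> 1" and n: "1 \<le> n"
    and y: "lo \<le> y" "y < hi" and hb: "\<And>z. lo \<le> z \<Longrightarrow> z \<le> hi \<Longrightarrow> \<bar>h z\<bar> \<le> H"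
  shows "MKZ lo hi n q h y = (\<Sum>k. wt q n ((y - lo) / (hi - lo)) k * h (lo + (hi - lo) * nd q n k))"
    and "summable (\<lambda>k. wt q n ((y - lo) / (hi - lo)) k * h (lo + (hi - lo) * nd q n k))"
proof -
  define t where "t = (y - lo) / (hi - lo)"
  have t: "0 \<le> t" "t < 1" using lohi y by (auto simp: t_def divide_simps)
  have nodes: "lo \<le> lo + (hi - lo) * nd q n k" "lo + (hi - lo) * nd q n k \<le> hi" for k
    using nd_nonneg[OF q n t, of k] nd_le1[OF q n t, of k] lohi by (rule node_bounds)+
  have hk: "\<bar>h (lo + (hi - lo) * nd q n k)\<bar> \<le> H" for k using hb nodes by auto
  have sc: "summable (\<lambda>k. ck q n k * t ^ k)" using genfun[of q t n] q t by auto
  have si: "summable (\<lambda>k. ck q n k * t ^ k * h (lo + (hi - lo) * nd q n k))"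
  proof (rule summable_comparison_test'[OF summable_mult[OF sc, of H]])
    fix k
    have p: "0 \<le> ck q n k * t ^ k" using ck_pos[of q n k] q t by auto
    have "norm (ck q n k * t ^ k * h (lo + (hi - lo) * nd q n k)) = (ck q n k * t ^ k) * \<bar>h (lo + (hi - lo) * nd q n k)\<bar>"
      unfolding real_norm_def abs_mult[of "ck q n k * t ^ k"] abs_of_nonneg[OF p] ..
    also have "\<dots> \<le> (ck q n k * t ^ k) * H" using hk[of k] p by (rule mult_left_mono)
    finally show "norm (ck q n k * t ^ k * h (lo + (hi - lo) * nd q n k)) \<le> H * (ck q n k * t ^ k)"
      by (simp add: mult.commute)
  qed
  have "MKZ lo hi n q h y = Pq q n t * (\<Sum>k. ck q n k * t ^ k * h (lo + (hi - lo) * nd q n k))"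
    using y PMKZ_eq[OF lohi, of n q y]
    by (simp add: MKZ_def t_def ck_def nd_def)
  also have "\<dots> = (\<Sum>k. wt q n t k * h (lo + (hi - lo) * nd q n k))"
    by (subst suminf_mult[OF si, symmetric]) (simp add: wt_def mult.assoc)
  finally show "MKZ lo hi n q h y = (\<Sum>k. wt q n ((y - lo) / (hi - lo)) k * h (lo + (hi - lo) * nd q n k))"
    by (simp add: t_def)
  show "summable (\<lambda>k. wt q n ((y - lo) / (hi - lo)) k * h (lo + (hi - lo) * nd q n k))"
    using wt_bounded_summable[OF q n t hk] by (simp add: t_def)
qed

lemma MKZ_diff:
  assumes lohi: "lo < hi" and q: "0 < q" "q \<le> 1" and n: "1 \<le> n"
    and y: "lo \<le> y" "y \<le> hi"
    and h1: "\<And>z. lo \<le> z \<Longrightarrow> z \<le> hi \<Longrightarrow> \<bar>h1 z\<bar> \<le> H"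
    and h2: "\<And>z. lo \<le> z \<Longrightarrow> z \<le> hi \<Longrightarrow> \<bar>h2 z\<bar> \<le> H"
    and d: "\<And>z. lo \<le> z \<Longrightarrow> z \<le> hi \<Longrightarrow> \<bar>h1 z - h2 z\<bar> \<le> D"
  shows "\<bar>MKZ lo hi n q h1 y - MKZ lo hi n q h2 y\<bar> \<le> D"
proof (cases "y = hi")
  case True then show ?thesis using d[of hi] lohi by (simp add: MKZ_def)
next
  case False
  then have y': "y < hi" using y by auto
  define t where "t = (y - lo) / (hi - lo)"
  have t: "0 \<le> t" "t < 1" using lohi y y' by (auto simp: t_def divide_simps)
  define g where "g k = lo + (hi - lo) * nd q n k" for k
  have nodes: "lo \<le> g k" "g k \<le> hi" for k
    using nd_nonneg[OF q n t, of k] nd_le1[OF q n t, of k] lohi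
    unfolding g_def by (rule node_bounds)+
  have r1: "MKZ lo hi n q h1 y = (\<Sum>k. wt q n t k * h1 (g k))" "summable (\<lambda>k. wt q n t k * h1 (g k))"
    using MKZ_repr[OF lohi q n y(1) y', of h1 H] h1 by (simp_all add: t_def g_def)
  have r2: "MKZ lo hi n q h2 y = (\<Sum>k. wt q n t k * h2 (g k))" "summable (\<lambda>k. wt q n t k * h2 (g k))"
    using MKZ_repr[OF lohi q n y(1) y', of h2 H] h2 by (simp_all add: t_def g_def)
  have "MKZ lo hi n q h1 y - MKZ lo hi n q h2 y = (\<Sum>k. wt q n t k * (h1 (g k) - h2 (g k)))"
    unfolding r1(1) r2(1) suminf_diff[OF r1(2) r2(2)] by (simp add: algebra_simps)
  also have "\<bar>\<dots>\<bar> \<le> (\<Sum>k. wt q n t k * D)"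
  proof (rule wt_abs_le(2)[OF q n t])
    show "\<bar>h1 (g k) - h2 (g k)\<bar> \<le> D" for k using d nodes by simp
    show "summable (\<lambda>k. wt q n t k * D)" by (rule summable_mult2[OF wt_summable[OF q n t]])
  qed
  also have "\<dots> = D" using suminf_mult2[OF wt_summable[OF q n t], of D] wt_sum[OF q n t] by simp
  finally show ?thesis .
qed

lemma MKZ_nonneg:
  assumes lohi: "lo < hi" and q: "0 < q" "q \<le> 1" and n: "1 \<le> n"
    and y: "lo \<le> y" "y \<le> hi"
    and h1: "\<And>z. lo \<le> z \<Longrightarrow> z \<le> hi \<Longrightarrow> \<bar>h z\<bar> \<le> H"
    and pos: "\<And>z. lo \<le> z \<Longrightarrow> z \<le> hi \<Longrightarrow> 0 \<le> h z"
  shows "0 \<le> MKZ lo hi n q h y"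
proof (cases "y = hi")
  case True then show ?thesis using pos[of hi] lohi by (simp add: MKZ_def)
next
  case False
  then have y': "y < hi" using y by auto
  define t where "t = (y - lo) / (hi - lo)"
  have t: "0 \<le> t" "t < 1" using lohi y y' by (auto simp: t_def divide_simps)
  define g where "g k = lo + (hi - lo) * nd q n k" for k
  have nodes: "lo \<le> g k" "g k \<le> hi" for k
    using nd_nonneg[OF q n t, of k] nd_le1[OF q n t, of k] lohi
    unfolding g_def by (rule node_bounds)+
  have r1: "MKZ lo hi n q h y = (\<Sum>k. wt q n t k * h (g k))" "summable (\<lambda>k. wt q n t k * h (g k))"
    using MKZ_repr[OF lohi q n y(1) y', of h H] h1 by (simp_all add: t_def g_def)
  have "0 \<le> wt q n t k * h (g k)" for k using wt_nonneg[OF q n t, of k] pos[of "g k"] nodes[of k] by simp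
  then show ?thesis unfolding r1(1) by (intro suminf_nonneg[OF r1(2)])
qed

lemma MKZ_approx:
  assumes lohi: "lo < hi" and q: "0 < q" "q \<le> 1" and n: "1 \<le> n"
    and y: "lo \<le> y" "y \<le> hi" and e: "0 \<le> \<epsilon>" and dl: "0 < \<delta>"
    and hb: "\<And>z. lo \<le> z \<Longrightarrow> z \<le> hi \<Longrightarrow> \<bar>h z\<bar> \<le> H"
    and uc: "\<And>u v. lo \<le> u \<Longrightarrow> u \<le> hi \<Longrightarrow> lo \<le> v \<Longrightarrow> v \<le> hi \<Longrightarrow> \<bar>u - v\<bar> < \<delta> \<Longrightarrow> \<bar>h u - h v\<bar> \<le> \<epsilon>"
  shows "\<bar>MKZ lo hi n q h y - h y\<bar> \<le> \<epsilon> + 2 * H * (hi - lo)\<^sup>2 / (\<delta>\<^sup>2 * qint q (Suc n))"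
proof -
  have H: "0 \<le> H" using hb[of lo] lohi by auto
  have Q: "0 < qint q (Suc n)" using qint_pos[of q "Suc n"] q by auto
  have rhs: "0 \<le> \<epsilon> + 2 * H * (hi - lo)\<^sup>2 / (\<delta>\<^sup>2 * qint q (Suc n))"
    using e H Q by (intro add_nonneg_nonneg divide_nonneg_nonneg) auto
  show ?thesis
  proof (cases "y = hi")
    case True then show ?thesis using rhs by (simp add: MKZ_def)
  next
    case False
    then have y': "y < hi" using y by auto
    define t where "t = (y - lo) / (hi - lo)"
    have t: "0 \<le> t" "t < 1" using lohi y y' by (auto simp: t_def divide_simps)
    define g where "g k = lo + (hi - lo) * nd q n k" for k
    have nodes: "lo \<le> g k" "g k \<le> hi" for k
      using nd_nonneg[OF q n t, of k] nd_le1[OF q n t, of k] lohi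
      unfolding g_def by (rule node_bounds)+
    have r1: "MKZ lo hi n q h y = (\<Sum>k. wt q n t k * h (g k))" "summable (\<lambda>k. wt q n t k * h (g k))"
      using MKZ_repr[OF lohi q n y(1) y', of h H] hb by (simp_all add: t_def g_def)
    have gy: "g k - y = (hi - lo) * (nd q n k - t)" for k
      using lohi by (simp add: g_def t_def field_simps)
    define c where "c = 2 * H * (hi - lo)\<^sup>2 / \<delta>\<^sup>2"
    have c: "0 \<le> c" using H by (simp add: c_def)
    have pt: "\<bar>h (g k) - h y\<bar> \<le> \<epsilon> + c * (nd q n k - t)\<^sup>2" for k
    proof (cases "\<bar>g k - y\<bar> < \<delta>")
      case True
      then have "\<bar>h (g k) - h y\<bar> \<le> \<epsilon>" using uc nodes y by auto
      moreover have "0 \<le> c * (nd q n k - t)\<^sup>2" using c by simp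
      ultimately show ?thesis by linarith
    next
      case False
      then have "\<delta> \<le> \<bar>g k - y\<bar>" by simp
      then have "\<delta>\<^sup>2 \<le> \<bar>g k - y\<bar>\<^sup>2" using dl by (intro power_mono) auto
      then have "\<delta>\<^sup>2 \<le> (g k - y)\<^sup>2" by simp
      then have "1 \<le> (g k - y)\<^sup>2 / \<delta>\<^sup>2" using dl by (simp add: divide_simps)
      then have "2 * H * 1 \<le> 2 * H * ((g k - y)\<^sup>2 / \<delta>\<^sup>2)" using H
        by (intro mult_left_mono) auto
      then have "2 * H \<le> 2 * H * ((g k - y)\<^sup>2 / \<delta>\<^sup>2)" by simp
      also have "\<dots> = c * (nd q n k - t)\<^sup>2" unfolding c_def gy by (simp add: power_mult_distrib)
      finally have "2 * H \<le> c * (nd q n k - t)\<^sup>2" .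
      moreover have "\<bar>h (g k) - h y\<bar> \<le> 2 * H" using hb[of "g k"] hb[of y] nodes y by auto
      ultimately show ?thesis using e by linarith
    qed
    have vb: "summable (\<lambda>k. wt q n t k * (nd q n k - t)\<^sup>2)"
      "(\<Sum>k. wt q n t k * (nd q n k - t)\<^sup>2) \<le> 1 / qint q (Suc n)"
      using var_bound[OF q n t] by auto
    have s2: "summable (\<lambda>k. \<epsilon> * wt q n t k + c * (wt q n t k * (nd q n k - t)\<^sup>2))"
      using wt_summable[OF q n t] vb(1) by (intro summable_add summable_mult)
    have d: "(\<Sum>k. wt q n t k * h (g k) - wt q n t k * h y) = (\<Sum>k. wt q n t k * h (g k)) - (\<Sum>k. wt q n t k * h y)"
      by (rule suminf_diff[OF r1(2) summable_mult2[OF wt_summable[OF q n t]], symmetric])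
    have m: "(\<Sum>k. wt q n t k * h y) = h y" using suminf_mult2[OF wt_summable[OF q n t], of "h y"] wt_sum[OF q n t] by simp
    have "MKZ lo hi n q h y - h y = (\<Sum>k. wt q n t k * (h (g k) - h y))"
      by (simp only: right_diff_distrib d r1(1) m)
    then have A: "\<bar>MKZ lo hi n q h y - h y\<bar> = \<bar>\<Sum>k. wt q n t k * (h (g k) - h y)\<bar>" by simp
    have eq: "wt q n t k * (\<epsilon> + c * (nd q n k - t)\<^sup>2) = \<epsilon> * wt q n t k + c * (wt q n t k * (nd q n k - t)\<^sup>2)" for k
      by (simp add: algebra_simps)
    have s3: "summable (\<lambda>k. wt q n t k * (\<epsilon> + c * (nd q n k - t)\<^sup>2))" unfolding eq by (rule s2)
    have "\<bar>MKZ lo hi n q h y - h y\<bar> \<le> (\<Sum>k. wt q n t k * (\<epsilon> + c * (nd q n k - t)\<^sup>2))"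
      unfolding A by (rule wt_abs_le(2)[OF q n t pt s3])
    also have "\<dots> = \<epsilon> * (\<Sum>k. wt q n t k) + c * (\<Sum>k. wt q n t k * (nd q n k - t)\<^sup>2)"
      unfolding eq suminf_add[OF summable_mult[OF wt_summable[OF q n t], of \<epsilon>] summable_mult[OF vb(1), of c], symmetric]
        suminf_mult[OF wt_summable[OF q n t], of \<epsilon>] suminf_mult[OF vb(1), of c] ..
    also have "\<dots> \<le> \<epsilon> + c * (1 / qint q (Suc n))"
      using wt_sum[OF q n t] mult_left_mono[OF vb(2) c] by simp
    also have "\<dots> = \<epsilon> + 2 * H * (hi - lo)\<^sup>2 / (\<delta>\<^sup>2 * qint q (Suc n))"
      by (simp add: c_def)
    finally show ?thesis .
  qed
qed

lemma cont_bounded: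
  fixes h :: "real \<Rightarrow> real" and lo hi :: real
  assumes "continuous_on {lo..hi} h"
  obtains H where "\<And>z. lo \<le> z \<Longrightarrow> z \<le> hi \<Longrightarrow> \<bar>h z\<bar> \<le> H"
proof -
  have "bounded (h ` {lo..hi})" by (intro compact_imp_bounded compact_continuous_image assms) auto
  then obtain B where "\<forall>x\<in>h ` {lo..hi}. norm x \<le> B" unfolding bounded_iff by blast
  then show ?thesis using that[of B] by auto
qed

lemma Pq_1: "Pq q n 1 = 0"
  unfolding Pq_def by (rule prod_zero) (auto intro!: bexI[of _ 0])

lemma Pq_cont: "isCont (\<lambda>t. Pq q n t) t0"
  unfolding Pq_def by (intro continuous_intros)

lemma nd_close:
  assumes q: "0 < q" "q \<le> 1" and n: "1 \<le> n"
  shows "1 - nd q n k \<le> qint q n / real (Suc k)"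
proof -
  have e: "qint q (n + k) = qint q k + q ^ k * qint q n" by (rule qint_add)
  have Q: "0 < qint q (k + n)" using qint_pos[of q "k+n"] q n by auto
  have Qn: "0 \<le> qint q n" using qint_nonneg[of q n] q by auto
  have g1: "qint q (Suc k) \<le> qint q (k + n)" using qint_mono[of q "Suc k" "k+n"] q n by auto
  have g2: "real (Suc k) * q ^ k \<le> qint q (Suc k)" using qint_ge_pow[of q k] q by auto
  have qk: "0 < q ^ k" using q by auto
  have Q2: "0 < real (Suc k) * q ^ k" using qk by simp
  have "1 - nd q n k = q ^ k * qint q n / qint q (k + n)"
    using Q e by (simp add: nd_def field_simps add.commute)
  also have "\<dots> \<le> q ^ k * qint q n / (real (Suc k) * q ^ k)"
    using g1 g2 qk Qn Q Q2 by (intro divide_left_mono mult_nonneg_nonneg mult_pos_pos) auto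
  also have "\<dots> = qint q n / real (Suc k)"
  proof -
    have "q ^ k * qint q n / (real (Suc k) * q ^ k) = (q ^ k * qint q n) / (q ^ k * real (Suc k))"
      by (simp only: mult.commute[of "real (Suc k)"])
    also have "\<dots> = qint q n / real (Suc k)" by (rule mult_divide_mult_cancel_left) (use qk q in simp)
    finally show ?thesis .
  qed
  finally show ?thesis .
qed

lemma MKZ_minus_const:
  assumes lohi: "lo < hi" and q: "0 < q" "q \<le> 1" and n: "1 \<le> n"
    and y: "lo \<le> y" "y < hi" and hb: "\<And>z. lo \<le> z \<Longrightarrow> z \<le> hi \<Longrightarrow> \<bar>h z\<bar> \<le> H"
  shows "MKZ lo hi n q h y - C = (\<Sum>k. wt q n ((y - lo) / (hi - lo)) k * (h (lo + (hi - lo) * nd q n k) - C))"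
proof -
  define t where "t = (y - lo) / (hi - lo)"
  have t: "0 \<le> t" "t < 1" using lohi y by (auto simp: t_def divide_simps)
  define g where "g k = lo + (hi - lo) * nd q n k" for k
  have r1: "MKZ lo hi n q h y = (\<Sum>k. wt q n t k * h (g k))" "summable (\<lambda>k. wt q n t k * h (g k))"
    using MKZ_repr[OF lohi q n y, of h H] hb by (simp_all add: t_def g_def)
  have d: "(\<Sum>k. wt q n t k * h (g k) - wt q n t k * C) = (\<Sum>k. wt q n t k * h (g k)) - (\<Sum>k. wt q n t k * C)"
    by (rule suminf_diff[OF r1(2) summable_mult2[OF wt_summable[OF q n t]], symmetric])
  have m: "(\<Sum>k. wt q n t k * C) = C" using suminf_mult2[OF wt_summable[OF q n t], of C] wt_sum[OF q n t] by simp
  have "MKZ lo hi n q h y - C = (\<Sum>k. wt q n t k * (h (g k) - C))"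
    by (simp only: right_diff_distrib d r1(1) m)
  then show ?thesis by (simp add: t_def g_def)
qed

lemma MKZ_cont:
  assumes lohi: "lo < hi" and q: "0 < q" "q \<le> 1" and n: "1 \<le> n"
    and hc: "continuous_on {lo..hi} h"
  shows "continuous_on {lo..hi} (MKZ lo hi n q h)"
proof -
  obtain H where hb: "\<And>z. lo \<le> z \<Longrightarrow> z \<le> hi \<Longrightarrow> \<bar>h z\<bar> \<le> H" using cont_bounded[OF hc] by blast
  have H: "0 \<le> H" using hb[of lo] lohi by auto
  define L where "L = hi - lo"
  have L: "0 < L" using lohi by (simp add: L_def)
  have nodes: "lo \<le> lo + (hi - lo) * nd q n k" "lo + (hi - lo) * nd q n k \<le> hi" for k
    using nd_nonneg[OF q n, of 0 k] nd_le1[OF q n, of 0 k] lohi by (auto intro: node_bounds)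
  have hk: "\<bar>h (lo + (hi - lo) * nd q n k)\<bar> \<le> H" for k using hb nodes by auto
  show ?thesis unfolding continuous_on_eq_continuous_within
  proof
    fix y0 assume y0: "y0 \<in> {lo..hi}"
    show "continuous (at y0 within {lo..hi}) (MKZ lo hi n q h)"
    proof (cases "y0 = hi")
      case False
      then have y0': "y0 < hi" using y0 by auto
      define c where "c k = ck q n k * h (lo + (hi - lo) * nd q n k)" for k
      define E where "E y = PMKZ lo hi n q y * (\<Sum>k. c k * ((y - lo) / (hi - lo)) ^ k)" for y
      have ME: "MKZ lo hi n q h y = E y" if "y \<noteq> hi" for y
        using that by (simp add: MKZ_def E_def c_def ck_def nd_def mult_ac)
      define t0 where "t0 = (y0 - lo) / (hi - lo)"
      have t0: "0 \<le> t0" "t0 < 1" using lohi y0 y0' by (auto simp: t0_def divide_simps)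
      define K where "K = (1 + t0) / 2"
      have K: "0 \<le> K" "K < 1" "t0 < K" using t0 by (auto simp: K_def)
      have sK: "summable (\<lambda>k. c k * K ^ k)"
      proof (rule summable_comparison_test'[OF summable_mult[OF conjunct1[OF genfun[of q K n]], of H]])
        fix k
        have p: "0 \<le> ck q n k * K ^ k" using ck_pos[of q n k] q K by auto
        have ce: "c k * K ^ k = (ck q n k * K ^ k) * h (lo + (hi - lo) * nd q n k)" by (simp add: c_def mult_ac)
        have "norm (c k * K ^ k) = (ck q n k * K ^ k) * \<bar>h (lo + (hi - lo) * nd q n k)\<bar>"
          unfolding ce real_norm_def abs_mult[of "ck q n k * K ^ k"] abs_of_nonneg[OF p] ..
        also have "\<dots> \<le> (ck q n k * K ^ k) * H" using hk[of k] p by (rule mult_left_mono)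
        finally show "norm (c k * K ^ k) \<le> H * (ck q n k * K ^ k)" by (simp add: mult.commute)
      qed (use q K in auto)
      have pc: "isCont (\<lambda>t. \<Sum>k. c k * t ^ k) t0"
        by (rule isCont_powser[OF sK]) (use t0 K in auto)
      have "isCont (\<lambda>y. \<Sum>k. c k * ((y - lo) / (hi - lo)) ^ k) y0"
        by (rule isCont_o2[where f="\<lambda>y. (y - lo) / (hi - lo)" and a=y0 and g="\<lambda>t. \<Sum>k. c k * t ^ k", OF _ pc[unfolded t0_def]])
           (intro continuous_intros, use lohi in auto)
      moreover have "isCont (PMKZ lo hi n q) y0"
        unfolding PMKZ_def by (intro continuous_intros) (use lohi in auto)
      ultimately have "isCont E y0" unfolding E_def by (intro continuous_intros)
      moreover have "eventually (\<lambda>y. MKZ lo hi n q h y = E y) (nhds y0)"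
      proof -
        have "eventually (\<lambda>y. y \<in> {..<hi}) (nhds y0)" using y0' by (intro eventually_nhds_in_open) auto
        then show ?thesis by eventually_elim (use ME in auto)
      qed
      ultimately have "isCont (MKZ lo hi n q h) y0" using isCont_cong by blast
      then show ?thesis by (rule continuous_at_imp_continuous_within)
    next
      case True
      show ?thesis unfolding True continuous_within_eps_delta
      proof (intro allI impI)
        fix \<epsilon> :: real assume e: "0 < \<epsilon>"
        have "continuous (at hi within {lo..hi}) h" using hc lohi
          by (simp add: continuous_on_eq_continuous_within)
        then obtain \<eta> where eta: "\<eta> > 0" "\<And>z. z \<in> {lo..hi} \<Longrightarrow> dist z hi < \<eta> \<Longrightarrow> dist (h z) (h hi) < \<epsilon> / 2"
          unfolding continuous_within_eps_delta using e by (meson half_gt_zero)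
        obtain K0 :: nat where K0: "L * qint q n / \<eta> < real K0" using reals_Archimedean2 by blast
        have close: "\<bar>h (lo + (hi - lo) * nd q n k) - h hi\<bar> < \<epsilon> / 2" if k: "K0 \<le> k" for k
        proof -
          have Qn: "0 \<le> qint q n" using qint_nonneg[of q n] q by auto
          have "1 - nd q n k \<le> qint q n / real (Suc k)" by (rule nd_close[OF q n])
          then have "L * (1 - nd q n k) \<le> L * (qint q n / real (Suc k))" using L by (intro mult_left_mono) auto
          also have "\<dots> < \<eta>"
          proof -
            have "L * qint q n / \<eta> < real (Suc k)" using K0 k by linarith
            then have "L * qint q n < \<eta> * real (Suc k)" using eta(1) by (simp add: divide_simps mult.commute)
            then show ?thesis by (simp add: divide_simps)
          qed
          moreover have "dist (lo + (hi - lo) * nd q n k) hi = L * (1 - nd q n k)"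
          proof -
            have np: "lo + (hi - lo) * nd q n k - hi \<le> 0" using nodes[of k] by simp
            show ?thesis unfolding dist_real_def abs_of_nonpos[OF np] by (simp add: L_def algebra_simps)
          qed
          ultimately have "dist (lo + (hi - lo) * nd q n k) hi < \<eta>" by simp
          then show ?thesis using eta(2) nodes[of k] by (auto simp: dist_real_def)
        qed
        define S where "S y = (\<Sum>k<K0. wt q n ((y - lo) / (hi - lo)) k)" for y
        have "isCont S hi" unfolding S_def wt_def
          by (intro continuous_intros isCont_o2[OF _ Pq_cont]) (use lohi in auto)
        moreover have "S hi = 0" using lohi by (simp add: S_def wt_def Pq_1)
        ultimately obtain d where d: "d > 0" "\<And>y. dist y hi < d \<Longrightarrow> dist (S y) 0 < \<epsilon> / (4 * (H + 1))"
          unfolding continuous_at_eps_delta using e H by (metis divide_pos_pos mult_pos_pos zero_less_numeral add_nonneg_pos zero_less_one)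
        show "\<exists>d>0. \<forall>y\<in>{lo..hi}. dist y hi < d \<longrightarrow> dist (MKZ lo hi n q h y) (MKZ lo hi n q h hi) < \<epsilon>"
        proof (intro exI[of _ d] conjI ballI impI)
          show "0 < d" by (rule d(1))
          fix y assume y: "y \<in> {lo..hi}" and dy: "dist y hi < d"
          have Mhi: "MKZ lo hi n q h hi = h hi" by (simp add: MKZ_def)
          show "dist (MKZ lo hi n q h y) (MKZ lo hi n q h hi) < \<epsilon>"
          proof (cases "y = hi")
            case True then show ?thesis using e by simp
          next
            case False
            then have y': "lo \<le> y" "y < hi" using y by auto
            define t where "t = (y - lo) / (hi - lo)"
            have t: "0 \<le> t" "t < 1" using lohi y' by (auto simp: t_def divide_simps)
            define u where "u k = \<epsilon> / 2 + (if k < K0 then 2 * H else 0)" for k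
            have ub: "\<bar>h (lo + (hi - lo) * nd q n k) - h hi\<bar> \<le> u k" for k
            proof (cases "k < K0")
              case True then show ?thesis using hk[of k] hb[of hi] lohi e by (auto simp: u_def)
            next
              case False then show ?thesis using close[of k] by (auto simp: u_def)
            qed
            have ubd: "\<bar>u k\<bar> \<le> \<epsilon> / 2 + 2 * H" for k using e H by (auto simp: u_def)
            have su: "summable (\<lambda>k. wt q n t k * u k)" by (rule wt_bounded_summable[OF q n t ubd])
            have "\<bar>MKZ lo hi n q h y - h hi\<bar> \<le> (\<Sum>k. wt q n t k * u k)"
            proof -
              have "MKZ lo hi n q h y - h hi = (\<Sum>k. wt q n t k * (h (lo + (hi - lo) * nd q n k) - h hi))"
                using MKZ_minus_const[OF lohi q n y' hb, where C="h hi"] by (simp add: t_def)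
              then show ?thesis using wt_abs_le(2)[OF q n t ub su] by simp
            qed
            also have "(\<Sum>k. wt q n t k * u k) = \<epsilon> / 2 * (\<Sum>k. wt q n t k) + (\<Sum>k. wt q n t k * (if k < K0 then 2 * H else 0))"
            proof -
              have s2: "summable (\<lambda>k. wt q n t k * (if k < K0 then 2 * H else 0))"
                by (rule wt_bounded_summable[OF q n t, of _ "2 * H"]) (use H in auto)
              have "(\<lambda>k. wt q n t k * u k) = (\<lambda>k. \<epsilon> / 2 * wt q n t k + wt q n t k * (if k < K0 then 2 * H else 0))"
                by (auto simp: u_def algebra_simps)
              then show ?thesis
                using suminf_add[OF summable_mult[OF wt_summable[OF q n t], of "\<epsilon>/2"] s2]
                  suminf_mult[OF wt_summable[OF q n t], of "\<epsilon>/2"] by simp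
            qed
            also have "(\<Sum>k. wt q n t k * (if k < K0 then 2 * H else 0)) = (\<Sum>k<K0. wt q n t k * (2 * H))"
              by (subst suminf_finite[of "{..<K0}"]) auto
            also have "\<dots> = 2 * H * S y" by (simp add: S_def t_def sum_distrib_left mult_ac)
            finally have A: "\<bar>MKZ lo hi n q h y - h hi\<bar> \<le> \<epsilon> / 2 + 2 * H * S y"
              using wt_sum[OF q n t] by simp
            have "\<bar>S y\<bar> < \<epsilon> / (4 * (H + 1))" using d(2)[OF dy] by (simp add: dist_real_def)
            then have "2 * H * S y \<le> 2 * H * (\<epsilon> / (4 * (H + 1)))" using H by (intro mult_left_mono) auto
            also have "\<dots> < \<epsilon> / 2" using H e by (simp add: field_simps)
            finally show ?thesis using A Mhi by (simp add: dist_real_def)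
          qed
        qed
      qed
    qed
  qed
qed

lemma pow_bound_zero:
  fixes c x K :: real
  assumes "0 \<le> c" "c < 1" "\<And>m. x \<le> K * c ^ m"
  shows "x \<le> 0"
proof -
  have "(\<lambda>m. K * c ^ m) \<longlonglongrightarrow> K * 0" using assms by (intro tendsto_intros) auto
  then show ?thesis using assms(3) by (intro LIMSEQ_le_const[of "\<lambda>m. K * c ^ m"]) auto
qed

context
  fixes x :: "nat \<Rightarrow> real" and N :: nat and a b :: "nat \<Rightarrow> real"
  assumes N: "2 \<le> N"
    and part: "\<forall>i\<in>{1..<N}. x i < x (Suc i)"
    and u_left: "\<forall>i\<in>{1..N-1}. a i * x 1 + b i = x i"
    and u_right: "\<forall>i\<in>{1..N-1}. a i * x N + b i = x (i + 1)"
begin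

lemma ul: "i \<in> {1..N-1} \<Longrightarrow> a i * x 1 + b i = x i" using u_left by blast
lemma ur: "i \<in> {1..N-1} \<Longrightarrow> a i * x N + b i = x (Suc i)" using u_right by auto
lemma pt: "i \<in> {1..<N} \<Longrightarrow> x i < x (Suc i)" using part by blast

lemma x_mono: "1 \<le> i \<Longrightarrow> i \<le> j \<Longrightarrow> j \<le> N \<Longrightarrow> x i \<le> x j"
proof (induction j)
  case 0 then show ?case by simp
next
  case (Suc j)
  show ?case
  proof (cases "i = Suc j")
    case True then show ?thesis by simp
  next
    case False
    then have "i \<le> j" using Suc by simp
    then have "x i \<le> x j" using Suc by simp
    also have "x j < x (Suc j)" using pt[of j] Suc \<open>i \<le> j\<close> by auto
    finally show ?thesis by simp
  qed
qed

lemma x1N: "x 1 < x N"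
proof -
  have "x 1 < x 2" using pt[of 1] N by (simp add: numeral_2_eq_2)
  also have "x 2 \<le> x N" using x_mono[of 2 N] N by auto
  finally show ?thesis .
qed

lemma a_pos: "i \<in> {1..N-1} \<Longrightarrow> 0 < a i"
proof -
  assume i: "i \<in> {1..N-1}"
  have "a i * (x N - x 1) = x (Suc i) - x i" using ul[OF i] ur[OF i] by (simp add: algebra_simps)
  moreover have "x i < x (Suc i)" using pt i by auto
  ultimately have "0 < a i * (x N - x 1)" by simp
  then show ?thesis using x1N by (simp add: zero_less_mult_iff)
qed

lemma u_range:
  assumes i: "i \<in> {1..N-1}" and y: "y \<in> {x 1..x N}"
  shows "a i * y + b i \<in> {x i..x (Suc i)}" "a i * y + b i \<in> {x 1..x N}"
proof -
  have ai: "0 < a i" by (rule a_pos[OF i])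
  have "a i * x 1 \<le> a i * y" "a i * y \<le> a i * x N" using ai y by auto
  then show r: "a i * y + b i \<in> {x i..x (Suc i)}" using ul[OF i] ur[OF i] by auto
  have "x 1 \<le> x i" "x (Suc i) \<le> x N" using i N by (auto intro!: x_mono)
  then show "a i * y + b i \<in> {x 1..x N}" using r by auto
qed

lemma u_inv:
  assumes i: "i \<in> {1..N-1}" and z: "z \<in> {x i..x (Suc i)}"
  shows "(z - b i) / a i \<in> {x 1..x N}" "a i * ((z - b i) / a i) + b i = z"
proof -
  have ai: "0 < a i" by (rule a_pos[OF i])
  show "a i * ((z - b i) / a i) + b i = z" using ai by simp
  have "a i * x 1 \<le> z - b i" "z - b i \<le> a i * x N" using ul[OF i] ur[OF i] z by auto
  then show "(z - b i) / a i \<in> {x 1..x N}" using ai by (auto simp: field_simps)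
qed

lemma cover: "z \<in> {x 1..x N} \<Longrightarrow> \<exists>i\<in>{1..N-1}. z \<in> {x i..x (Suc i)}"
proof -
  assume z: "z \<in> {x 1..x N}"
  define A where "A = {i \<in> {1..N-1}. x i \<le> z}"
  have "1 \<in> A" using z N by (auto simp: A_def)
  have fA: "finite A" by (simp add: A_def)
  define i where "i = Max A"
  have iA: "i \<in> A" using fA \<open>1 \<in> A\<close> unfolding i_def by (intro Max_in) auto
  have "z \<le> x (Suc i)"
  proof (cases "Suc i \<le> N - 1")
    case True
    then have "Suc i \<notin> A" using Max_ge[OF fA, of "Suc i"] unfolding i_def by auto
    then show ?thesis using True by (auto simp: A_def)
  next
    case False
    then have "Suc i = N" using iA N by (auto simp: A_def)
    then show ?thesis using z by auto
  qed
  then show ?thesis using iA by (auto simp: A_def)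
qed

lemma cover2: "z \<in> {x 1..x N} \<Longrightarrow> \<exists>i\<in>{1..N-1}. \<exists>y\<in>{x 1..x N}. z = a i * y + b i"
  using cover u_inv by metis

end

definition Top :: "(nat \<Rightarrow> real) \<Rightarrow> nat \<Rightarrow> (nat \<Rightarrow> real) \<Rightarrow> (nat \<Rightarrow> real) \<Rightarrow> (nat \<Rightarrow> real \<Rightarrow> real)
   \<Rightarrow> (real \<Rightarrow> real) \<Rightarrow> (real \<Rightarrow> real) \<Rightarrow> (real \<Rightarrow> real) \<Rightarrow> real \<Rightarrow> real" where
  "Top x N a b \<alpha> h B g z = (if z \<in> {x 1..x N} then
     (let i = LEAST i. i \<in> {1..N-1} \<and> z \<in> {x i..x (Suc i)}
      in h z + \<alpha> i ((z - b i) / a i) * (g ((z - b i) / a i) - B ((z - b i) / a i))) else 0)"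

context
  fixes x :: "nat \<Rightarrow> real" and N :: nat and a b :: "nat \<Rightarrow> real"
    and \<alpha> :: "nat \<Rightarrow> real \<Rightarrow> real" and h B :: "real \<Rightarrow> real" and c :: real
  assumes N: "2 \<le> N"
    and part: "\<forall>i\<in>{1..<N}. x i < x (Suc i)"
    and u_left: "\<forall>i\<in>{1..N-1}. a i * x 1 + b i = x i"
    and u_right: "\<forall>i\<in>{1..N-1}. a i * x N + b i = x (i + 1)"
    and hc: "continuous_on {x 1..x N} h"
    and Bc: "continuous_on {x 1..x N} B"
    and Bl: "B (x 1) = h (x 1)" and Br: "B (x N) = h (x N)"
    and \<alpha>c: "\<forall>i\<in>{1..N-1}. continuous_on {x 1..x N} (\<alpha> i)"
    and \<alpha>b: "\<forall>i\<in>{1..N-1}. \<forall>y\<in>{x 1..x N}. \<bar>\<alpha> i y\<bar> \<le> c"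
    and c0: "0 \<le> c" and c1: "c < 1"
begin

abbreviation "Ix \<equiv> {x 1..x N}"
abbreviation "TT \<equiv> Top x N a b \<alpha> h B"

lemmas gul = ul[OF N part u_left u_right]
lemmas gur = ur[OF N part u_left u_right]
lemmas gmono = x_mono[OF N part u_left u_right]
lemmas g1N = x1N[OF N part u_left u_right]
lemmas gapos = a_pos[OF N part u_left u_right]
lemmas grange = u_range[OF N part u_left u_right]
lemmas ginv = u_inv[OF N part u_left u_right]
lemmas gcover = cover[OF N part u_left u_right]
lemmas gcover2 = cover2[OF N part u_left u_right]

definition good :: "(real \<Rightarrow> real) \<Rightarrow> bool" where
  "good g \<longleftrightarrow> continuous_on Ix g \<and> g (x 1) = h (x 1) \<and> g (x N) = h (x N) \<and> (\<forall>z. z \<notin> Ix \<longrightarrow> g z = 0)"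

lemma T_eq:
  assumes g1: "g (x 1) = h (x 1)" and gN: "g (x N) = h (x N)"
    and i: "i \<in> {1..N-1}" and y: "y \<in> Ix"
  shows "TT g (a i * y + b i) = h (a i * y + b i) + \<alpha> i y * (g y - B y)"
proof -
  define z where "z = a i * y + b i"
  have zI: "z \<in> Ix" "z \<in> {x i..x (Suc i)}" using grange[OF i y] by (auto simp: z_def)
  define P where "P j \<longleftrightarrow> j \<in> {1..N-1} \<and> z \<in> {x j..x (Suc j)}" for j
  define j where "j = (LEAST j. P j)"
  have Pi: "P i" using i zI by (simp add: P_def)
  have Pj: "P j" unfolding j_def by (rule LeastI[of P i, OF Pi])
  have ji: "j \<le> i" unfolding j_def by (rule Least_le[of P i, OF Pi])
  have jN: "j \<in> {1..N-1}" using Pj by (simp add: P_def)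
  have aj: "0 < a j" "0 < a i" using gapos jN i by auto
  have Tz: "TT g z = h z + \<alpha> j ((z - b j) / a j) * (g ((z - b j) / a j) - B ((z - b j) / a j))"
    using zI(1) unfolding Top_def j_def P_def by (simp add: Let_def)
  show ?thesis
  proof (cases "j = i")
    case True
    then have "(z - b j) / a j = y" using aj by (simp add: z_def)
    then show ?thesis using Tz True by (simp add: z_def)
  next
    case False
    then have "Suc j \<le> i" using ji by simp
    then have "x (Suc j) \<le> x i" using i by (intro gmono) auto
    then have zx: "z = x i" "z = x (Suc j)" using zI Pj by (auto simp: P_def)
    have "a i * y + b i = a i * x 1 + b i" using zx gul[OF i] by (simp add: z_def)
    then have y1: "y = x 1" using aj by simp
    have "(z - b j) / a j = x N" using zx(2) gur[OF jN] aj by (auto simp: field_simps)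
    then show ?thesis using Tz y1 g1 gN Bl Br by (simp add: z_def)
  qed
qed

lemma I_union: "Ix = (\<Union>i\<in>{1..N-1}. {x i..x (Suc i)})"
proof
  show "Ix \<subseteq> (\<Union>i\<in>{1..N-1}. {x i..x (Suc i)})" using gcover by blast
  show "(\<Union>i\<in>{1..N-1}. {x i..x (Suc i)}) \<subseteq> Ix"
  proof
    fix z assume "z \<in> (\<Union>i\<in>{1..N-1}. {x i..x (Suc i)})"
    then obtain i where i: "i \<in> {1..N-1}" "z \<in> {x i..x (Suc i)}" by blast
    have "x 1 \<le> x i" "x (Suc i) \<le> x N" using i N by (auto intro!: gmono)
    then show "z \<in> Ix" using i by auto
  qed
qed

lemma T_good: "good g \<Longrightarrow> good (TT g)"
proof -
  assume g: "good g"
  have g1: "g (x 1) = h (x 1)" and gN: "g (x N) = h (x N)" and gc: "continuous_on Ix g"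
    using g by (auto simp: good_def)
  have piece: "continuous_on {x i..x (Suc i)} (TT g)" if i: "i \<in> {1..N-1}" for i
  proof -
    define f where "f z = (z - b i) / a i" for z
    have fs: "f ` {x i..x (Suc i)} \<subseteq> Ix" using ginv[OF i] by (auto simp: f_def)
    have fc: "continuous_on {x i..x (Suc i)} f" unfolding f_def using gapos[OF i] by (intro continuous_intros) auto
    have sub: "{x i..x (Suc i)} \<subseteq> Ix" using I_union i by blast
    have "continuous_on {x i..x (Suc i)} (\<lambda>z. h z + \<alpha> i (f z) * (g (f z) - B (f z)))"
      using \<alpha>c i
      by (intro continuous_intros continuous_on_subset[OF hc sub] continuous_on_compose2[OF _ fc fs] gc Bc) auto
    moreover have "h z + \<alpha> i (f z) * (g (f z) - B (f z)) = TT g z" if z: "z \<in> {x i..x (Suc i)}" for z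
      using T_eq[OF g1 gN i ginv(1)[OF i z]] ginv(2)[OF i z] by (simp add: f_def)
    ultimately show ?thesis by (rule continuous_on_eq)
  qed
  have "continuous_on (\<Union>i\<in>{1..N-1}. {x i..x (Suc i)}) (TT g)"
    by (rule continuous_on_closed_Union) (use piece in auto)
  then have c: "continuous_on Ix (TT g)" using I_union by simp
  have i1: "1 \<in> {1..N-1}" and iN: "N - 1 \<in> {1..N-1}" using N by auto
  have x1I: "x 1 \<in> Ix" and xNI: "x N \<in> Ix" using g1N by auto
  have "TT g (x 1) = h (x 1)" using T_eq[OF g1 gN i1 x1I] gul[OF i1] g1 Bl by simp
  moreover have "TT g (x N) = h (x N)"
    using T_eq[OF g1 gN iN xNI] gur[OF iN] N gN Br by (simp add: Suc_diff_1)
  moreover have "\<forall>z. z \<notin> Ix \<longrightarrow> TT g z = 0" by (simp add: Top_def)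
  ultimately show "good (TT g)" using c by (simp add: good_def)
qed

lemma T_contr:
  assumes g1: "good g1" and g2: "good g2" and D: "\<And>y. y \<in> Ix \<Longrightarrow> \<bar>g1 y - g2 y\<bar> \<le> D"
    and z: "z \<in> Ix"
  shows "\<bar>TT g1 z - TT g2 z\<bar> \<le> c * D"
proof -
  obtain i y where i: "i \<in> {1..N-1}" and y: "y \<in> Ix" and zy: "z = a i * y + b i" using gcover2[OF z] by blast
  have "TT g1 z - TT g2 z = \<alpha> i y * (g1 y - g2 y)"
    using T_eq[of g1 i y] T_eq[of g2 i y] g1 g2 i y zy by (simp add: good_def algebra_simps)
  also have "\<bar>\<dots>\<bar> \<le> c * D"
    unfolding abs_mult using \<alpha>b i y D[OF y] c0 by (intro mult_mono) auto
  finally show ?thesis .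
qed

lemma fixpoint_exists: "\<exists>G. good G \<and> (\<forall>z\<in>Ix. TT G z = G z)"
proof -
  define g0 where "g0 z = (if z \<in> Ix then h z else 0)" for z
  have x1I: "x 1 \<in> Ix" and xNI: "x N \<in> Ix" using g1N by auto
  have "continuous_on Ix g0" by (rule continuous_on_eq[OF hc]) (simp add: g0_def)
  then have g0g: "good g0" using x1I xNI by (simp add: good_def g0_def)
  define gs where "gs m = (TT ^^ m) g0" for m
  have gsg: "good (gs m)" for m by (induction m) (simp_all add: gs_def g0g T_good)
  have gsS: "gs (Suc m) = TT (gs m)" for m by (simp add: gs_def)
  have gsc: "continuous_on Ix (gs m)" for m using gsg[of m] by (simp add: good_def)
  have "continuous_on Ix (\<lambda>z. gs 1 z - gs 0 z)" by (intro continuous_intros gsc)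
  then obtain D0 where D0: "\<And>z. x 1 \<le> z \<Longrightarrow> z \<le> x N \<Longrightarrow> \<bar>gs 1 z - gs 0 z\<bar> \<le> D0"
    using cont_bounded by blast
  have D0p: "0 \<le> D0" using D0[of "x 1"] g1N by auto
  have step: "\<And>z. z \<in> Ix \<Longrightarrow> \<bar>gs (Suc m) z - gs m z\<bar> \<le> c ^ m * D0" for m
  proof (induction m)
    case 0 then show ?case using D0 by auto
  next
    case (Suc m)
    have "\<bar>TT (gs (Suc m)) z - TT (gs m) z\<bar> \<le> c * (c ^ m * D0)" if "z \<in> Ix" for z
      by (rule T_contr[OF gsg gsg Suc.IH that])
    then show ?case using Suc.prems by (simp add: gsS[of "Suc m"] gsS[of m] mult.assoc)
  qed
  define d where "d j z = gs (Suc j) z - gs j z" for j z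
  define R where "R m = D0 * c ^ m / (1 - c)" for m
  define G where "G z = (if z \<in> Ix then gs 0 z + (\<Sum>j. d j z) else 0)" for z
  have geo: "summable (\<lambda>j. c ^ j)" using c0 c1 by (intro summable_geometric) auto
  have sd: "summable (\<lambda>j. d j z)" "summable (\<lambda>j. \<bar>d j z\<bar>)" if z: "z \<in> Ix" for z
  proof -
    show "summable (\<lambda>j. \<bar>d j z\<bar>)"
      by (rule summable_comparison_test'[OF summable_mult[OF geo, of D0]])
         (use step[OF z] in \<open>auto simp: d_def mult.commute\<close>)
    then show "summable (\<lambda>j. d j z)" by (rule summable_rabs_cancel)
  qed
  have tail: "\<bar>G z - gs m z\<bar> \<le> R m" if z: "z \<in> Ix" for z m
  proof -
    have tel: "gs m z = gs 0 z + (\<Sum>j<m. d j z)"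
      using sum_lessThan_telescope[of "\<lambda>j. gs j z" m] by (simp add: d_def)
    have "(\<Sum>j. d j z) = (\<Sum>j. d (j + m) z) + (\<Sum>j<m. d j z)"
      by (rule suminf_split_initial_segment[OF sd(1)[OF z]])
    then have e: "G z - gs m z = (\<Sum>j. d (j + m) z)" using z tel by (simp add: G_def)
    have sa: "summable (\<lambda>j. \<bar>d (j + m) z\<bar>)" using sd(2)[OF z] summable_iff_shift[of "\<lambda>j. \<bar>d j z\<bar>" m] by blast
    have sg: "summable (\<lambda>j. (D0 * c ^ m) * c ^ j)" by (rule summable_mult[OF geo])
    have "\<bar>\<Sum>j. d (j + m) z\<bar> \<le> (\<Sum>j. \<bar>d (j + m) z\<bar>)" by (rule summable_rabs[OF sa])
    also have "\<dots> \<le> (\<Sum>j. (D0 * c ^ m) * c ^ j)"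
    proof (rule suminf_le[OF _ sa sg])
      fix j
      show "\<bar>d (j + m) z\<bar> \<le> D0 * c ^ m * c ^ j" using step[OF z, of "j + m"]
        by (simp add: d_def power_add mult_ac)
    qed
    also have "\<dots> = (D0 * c ^ m) * (1 / (1 - c))"
      using suminf_mult[OF geo, of "D0 * c ^ m"] suminf_geometric[of c] c0 c1 by simp
    finally show ?thesis using e by (simp add: R_def)
  qed
  have Rlim: "R \<longlonglongrightarrow> 0"
  proof -
    have "(\<lambda>m. D0 * c ^ m / (1 - c)) \<longlonglongrightarrow> D0 * 0 / (1 - c)"
      using c0 c1 by (intro tendsto_intros) auto
    then show ?thesis by (simp add: R_def[abs_def])
  qed
  have Gc: "continuous_on Ix G"
  proof (rule uniform_limit_theorem[of _ gs])
    show "\<forall>\<^sub>F n in sequentially. continuous_on Ix (gs n)" using gsc by simp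
    show "uniform_limit Ix gs G sequentially"
    proof (rule uniform_limitI)
      fix e :: real assume e: "0 < e"
      have "\<forall>\<^sub>F m in sequentially. R m < e" using order_tendstoD(2)[OF Rlim e] .
      then show "\<forall>\<^sub>F m in sequentially. \<forall>z\<in>Ix. dist (gs m z) (G z) < e"
      proof (rule eventually_mono)
        fix m assume Rm: "R m < e"
        show "\<forall>z\<in>Ix. dist (gs m z) (G z) < e"
        proof
          fix z assume z: "z \<in> Ix"
          have "\<bar>G z - gs m z\<bar> \<le> R m" by (rule tail[OF z])
          then show "dist (gs m z) (G z) < e" using Rm by (simp add: dist_real_def abs_minus_commute)
        qed
      qed
    qed
  qed simp
  have d1: "d j (x 1) = 0" "d j (x N) = 0" for j using gsg by (auto simp: d_def good_def)
  have Gg: "good G" using Gc d1 x1I xNI gsg[of 0] by (simp add: good_def G_def)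
  have fx: "TT G z = G z" if z: "z \<in> Ix" for z
  proof -
    have R0: "0 \<le> R m" for m using D0p c0 c1 by (simp add: R_def)
    have Rm: "R (Suc m) \<le> R m" for m
    proof -
      have "c ^ Suc m \<le> c ^ m" using c0 c1 by (intro power_decreasing) auto
      then have "D0 * c ^ Suc m \<le> D0 * c ^ m" using D0p by (intro mult_left_mono)
      then show ?thesis unfolding R_def using c1 by (intro divide_right_mono) auto
    qed
    have "\<bar>TT G z - G z\<bar> \<le> (2 * D0 / (1 - c)) * c ^ m" for m
    proof -
      have "\<bar>TT G z - TT (gs m) z\<bar> \<le> c * R m"
        by (rule T_contr[OF Gg gsg _ z]) (use tail in \<open>simp add: abs_minus_commute\<close>)
      also have "\<dots> \<le> 1 * R m" using R0[of m] c1 by (intro mult_right_mono) auto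
      finally have a1: "\<bar>TT G z - gs (Suc m) z\<bar> \<le> R m" by (simp add: gsS)
      have a2: "\<bar>gs (Suc m) z - G z\<bar> \<le> R m" using tail[OF z, of "Suc m"] Rm[of m] by (simp add: abs_minus_commute)
      have "\<bar>TT G z - G z\<bar> \<le> 2 * R m" using a1 a2 by linarith
      then show ?thesis by (simp add: R_def)
    qed
    then have "\<bar>TT G z - G z\<bar> \<le> 0" by (rule pow_bound_zero[OF c0 c1])
    then show ?thesis by simp
  qed
  show ?thesis using Gg fx by blast
qed

definition sol :: "(real \<Rightarrow> real) \<Rightarrow> bool" where
  "sol g \<longleftrightarrow> continuous_on Ix g \<and> (\<forall>y. y \<notin> Ix \<longrightarrow> g y = 0) \<and>
     (\<forall>i\<in>{1..N-1}. \<forall>y\<in>Ix. g (a i * y + b i) = h (a i * y + b i) + \<alpha> i y * (g y - B y))"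

lemma sol_exists: "\<exists>g. sol g"
proof -
  obtain G where G: "good G" "\<And>z. z \<in> Ix \<Longrightarrow> TT G z = G z" using fixpoint_exists by blast
  have "G (a i * y + b i) = h (a i * y + b i) + \<alpha> i y * (G y - B y)" if i: "i \<in> {1..N-1}" and y: "y \<in> Ix" for i y
    using G(2)[OF grange(2)[OF i y]] T_eq[of G i y] G(1) i y by (simp add: good_def)
  then show ?thesis using G(1) unfolding sol_def good_def by blast
qed

lemma sol_unique: assumes "sol g1" "sol g2" shows "g1 = g2"
proof
  fix z
  have c1': "continuous_on Ix g1" "continuous_on Ix g2" using assms by (auto simp: sol_def)
  have "continuous_on Ix (\<lambda>z. g1 z - g2 z)" by (intro continuous_intros c1')
  then obtain D where D: "\<And>z. x 1 \<le> z \<Longrightarrow> z \<le> x N \<Longrightarrow> \<bar>g1 z - g2 z\<bar> \<le> D"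
    using cont_bounded by blast
  have it: "\<And>z. z \<in> Ix \<Longrightarrow> \<bar>g1 z - g2 z\<bar> \<le> D * c ^ m" for m
  proof (induction m)
    case 0 then show ?case using D by auto
  next
    case (Suc m)
    obtain i y where i: "i \<in> {1..N-1}" and y: "y \<in> Ix" and zy: "z = a i * y + b i"
      using gcover2[OF Suc.prems] by blast
    have e1: "g1 z = h z + \<alpha> i y * (g1 y - B y)" using assms(1) i y unfolding sol_def zy by blast
    have e2: "g2 z = h z + \<alpha> i y * (g2 y - B y)" using assms(2) i y unfolding sol_def zy by blast
    have "g1 z - g2 z = \<alpha> i y * (g1 y - g2 y)" unfolding e1 e2 by (simp add: algebra_simps)
    also have "\<bar>\<dots>\<bar> \<le> c * (D * c ^ m)"
      unfolding abs_mult using \<alpha>b i y Suc.IH[OF y] c0 by (intro mult_mono) auto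
    finally show ?case by (simp add: mult_ac)
  qed
  show "g1 z = g2 z"
  proof (cases "z \<in> Ix")
    case True
    then have "\<bar>g1 z - g2 z\<bar> \<le> 0" using it[OF True] by (intro pow_bound_zero[OF c0 c1]) (simp add: mult.commute)
    then show ?thesis by simp
  next
    case False then show ?thesis using assms by (simp add: sol_def)
  qed
qed

lemma sol_bound:
  assumes g: "sol g" and E: "\<And>y. y \<in> Ix \<Longrightarrow> \<bar>h y - B y\<bar> \<le> E" and z: "z \<in> Ix"
  shows "\<bar>g z - h z\<bar> \<le> c * E / (1 - c)"
proof -
  have gc: "continuous_on Ix g" using g by (simp add: sol_def)
  have "continuous_on Ix (\<lambda>z. \<bar>g z - h z\<bar>)" using gc hc by (intro continuous_intros)
  then have "\<exists>z0\<in>Ix. \<forall>y\<in>Ix. \<bar>g y - h y\<bar> \<le> \<bar>g z0 - h z0\<bar>"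
    by (intro continuous_attains_sup) (use g1N in auto)
  then obtain z0 where z0: "z0 \<in> Ix" "\<And>y. y \<in> Ix \<Longrightarrow> \<bar>g y - h y\<bar> \<le> \<bar>g z0 - h z0\<bar>"
    by blast
  define M where "M = \<bar>g z0 - h z0\<bar>"
  obtain i y where i: "i \<in> {1..N-1}" and y: "y \<in> Ix" and zy: "z0 = a i * y + b i"
    using gcover2[OF z0(1)] by blast
  have "g z0 = h z0 + \<alpha> i y * (g y - B y)" using g i y unfolding sol_def zy by blast
  then have "g z0 - h z0 = \<alpha> i y * (g y - B y)" by simp
  also have "\<bar>\<dots>\<bar> \<le> c * (M + E)"
  proof -
    have "\<bar>g y - B y\<bar> \<le> \<bar>g y - h y\<bar> + \<bar>h y - B y\<bar>" by linarith
    also have "\<dots> \<le> M + E" using z0(2)[OF y] E[OF y] by (simp add: M_def)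
    finally show ?thesis unfolding abs_mult using \<alpha>b i y c0 by (intro mult_mono) auto
  qed
  finally have "M \<le> c * M + c * E" by (simp add: M_def algebra_simps)
  then have "M * (1 - c) \<le> c * E" by (simp add: algebra_simps)
  then have "M \<le> c * E / (1 - c)" using c1 by (simp add: field_simps)
  then show ?thesis using z0(2)[OF z] by (simp add: M_def)
qed

lemma sol_range:
  assumes g: "sol g"
    and step: "\<And>i y e v. i \<in> {1..N-1} \<Longrightarrow> y \<in> Ix \<Longrightarrow> 0 \<le> e \<Longrightarrow> -e \<le> v \<Longrightarrow> v \<le> Cc + e \<Longrightarrow>
        -(c * e) \<le> h (a i * y + b i) + \<alpha> i y * (v - B y) \<and> h (a i * y + b i) + \<alpha> i y * (v - B y) \<le> Cc + c * e"
    and z: "z \<in> Ix"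
  shows "0 \<le> g z \<and> g z \<le> Cc"
proof -
  have gc: "continuous_on Ix g" using g by (simp add: sol_def)
  have "continuous_on Ix (\<lambda>z. max (- g z) (g z - Cc))" using gc by (intro continuous_intros)
  then have "\<exists>z0\<in>Ix. \<forall>y\<in>Ix. max (- g y) (g y - Cc) \<le> max (- g z0) (g z0 - Cc)"
    by (intro continuous_attains_sup) (use g1N in auto)
  then obtain z0 where z0: "z0 \<in> Ix" "\<And>y. y \<in> Ix \<Longrightarrow> max (- g y) (g y - Cc) \<le> max (- g z0) (g z0 - Cc)"
    by blast
  define M where "M = max (- g z0) (g z0 - Cc)"
  define e where "e = max M 0"
  obtain i y where i: "i \<in> {1..N-1}" and y: "y \<in> Ix" and zy: "z0 = a i * y + b i"
    using gcover2[OF z0(1)] by blast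
  have ey: "-e \<le> g y" "g y \<le> Cc + e" using z0(2)[OF y] by (auto simp: e_def M_def)
  have "g z0 = h (a i * y + b i) + \<alpha> i y * (g y - B y)" using g i y unfolding sol_def zy by blast
  then have "-(c * e) \<le> g z0" "g z0 \<le> Cc + c * e" using step[OF i y _ ey] by (auto simp: e_def)
  then have Me: "M \<le> c * e" by (simp add: M_def)
  have "M \<le> 0"
  proof (rule ccontr)
    assume "\<not> M \<le> 0"
    then have "e = M" "0 < M" by (auto simp: e_def)
    then have "M * (1 - c) \<le> 0" using Me by (simp add: algebra_simps)
    then show False using \<open>0 < M\<close> c1 by (simp add: mult_le_0_iff)
  qed
  then show ?thesis using z0(2)[OF z] by (auto simp: M_def)
qed

lemma the_sol:
  assumes "B = MKZ (x 1) (x N) n q h"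
  shows "sol (qfractal x N a b \<alpha> n q h)"
proof -
  have ex1: "\<exists>!g. sol g" using sol_exists sol_unique by blast
  have "sol (THE g. sol g)" by (rule theI'[OF ex1])
  moreover have "(THE g. sol g) = qfractal x N a b \<alpha> n q h"
    unfolding qfractal_def sol_def by (simp only: assms)
  ultimately show ?thesis by simp
qed

end

lemma MKZ_left:
  assumes lohi: "lo < hi" and q: "0 < q" "q \<le> 1" and n: "1 \<le> n"
    and hb: "\<And>z. lo \<le> z \<Longrightarrow> z \<le> hi \<Longrightarrow> \<bar>h z\<bar> \<le> H"
  shows "MKZ lo hi n q h lo = h lo"
proof -
  have "MKZ lo hi n q h lo = (\<Sum>k. wt q n 0 k * h (lo + (hi - lo) * nd q n k))"
    using MKZ_repr(1)[OF lohi q n _ _ hb, of lo] lohi by simp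
  also have "\<dots> = (\<Sum>k\<in>{0}. wt q n 0 k * h (lo + (hi - lo) * nd q n k))"
    by (rule suminf_finite) (auto simp: wt_def)
  also have "\<dots> = h lo" using q by (simp add: wt_def Pq_def nd_def)
  finally show ?thesis .
qed

lemma sn_upper:
  fixes g :: "real \<Rightarrow> real"
  assumes "continuous_on {lo..hi} g" "y \<in> {lo..hi}"
  shows "\<bar>g y\<bar> \<le> supnorm {lo..hi} g"
proof -
  obtain H where H: "\<And>z. lo \<le> z \<Longrightarrow> z \<le> hi \<Longrightarrow> \<bar>g z\<bar> \<le> H" using cont_bounded[OF assms(1)] by blast
  have "bdd_above ((\<lambda>z. \<bar>g z\<bar>) ` {lo..hi})" using H by (intro bdd_aboveI[of _ H]) auto
  then show ?thesis unfolding supnorm_def by (rule cSUP_upper[OF assms(2)])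
qed

lemma sn_le:
  fixes g :: "real \<Rightarrow> real"
  assumes "lo \<le> hi" "\<And>y. y \<in> {lo..hi} \<Longrightarrow> \<bar>g y\<bar> \<le> B"
  shows "supnorm {lo..hi} g \<le> B"
  unfolding supnorm_def using assms by (intro cSUP_least) auto

lemma pos_step:
  fixes F Bv v e \<alpha> c \<phi> \<Phi> \<phi>M \<Phi>M C :: real
  assumes F0: "0 \<le> F" and F1: "\<phi> \<le> F" and F2: "F \<le> \<Phi>" and PC: "\<Phi> < C"
    and M0: "0 \<le> \<phi>M" and M1: "\<phi>M \<le> Bv" and M2: "Bv \<le> \<Phi>M" and MC: "\<phi>M < C"
    and e0: "0 \<le> e" and v1: "-e \<le> v" and v2: "v \<le> C + e" and ac: "\<bar>\<alpha>\<bar> \<le> c"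
    and lb: "max (- \<phi> / (C - \<phi>M)) (- ((C - \<Phi>) / \<Phi>M)) \<le> \<alpha>"
    and ub: "\<alpha> \<le> min (\<phi> / \<Phi>M) ((C - \<Phi>) / (C - \<phi>M))"
  shows "-(c * e) \<le> F + \<alpha> * (v - Bv) \<and> F + \<alpha> * (v - Bv) \<le> C + c * e"
proof -
  define D where "D = C - \<phi>M"
  have D: "0 < D" using MC by (simp add: D_def)
  have c0: "0 \<le> c" using ac by linarith
  have ce: "0 \<le> c * e" using c0 e0 by simp
  have aD1: "\<alpha> * D \<le> C - \<Phi>" using ub D by (simp add: D_def pos_le_divide_eq)
  have aD2: "- \<phi> \<le> \<alpha> * D"
  proof -
    have "- \<alpha> \<le> \<phi> / D" using lb by (simp add: D_def)
    then have "- \<alpha> * D \<le> \<phi>" by (simp add: pos_le_divide_eq[OF D])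
    then show ?thesis by simp
  qed
  have ae: "\<bar>\<alpha> * e\<bar> \<le> c * e" using ac e0 by (simp add: abs_mult mult_right_mono)
  show ?thesis
  proof (cases "\<Phi>M = 0")
    case True
    then have "\<alpha> = 0" using lb ub by simp
    then show ?thesis using F0 F2 PC ce by simp
  next
    case False
    then have PM: "0 < \<Phi>M" using M0 M1 M2 by simp
    have aP1: "\<alpha> * \<Phi>M \<le> \<phi>" using ub PM by (simp add: pos_le_divide_eq)
    have aP2: "- (C - \<Phi>) \<le> \<alpha> * \<Phi>M"
    proof -
      have "- \<alpha> \<le> (C - \<Phi>) / \<Phi>M" using lb by simp
      then have "- \<alpha> * \<Phi>M \<le> C - \<Phi>" by (simp add: pos_le_divide_eq[OF PM])
      then show ?thesis by simp
    qed
    show ?thesis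
    proof (cases "0 \<le> \<alpha>")
      case True
      have l: "\<alpha> * (- e - \<Phi>M) \<le> \<alpha> * (v - Bv)" using True v1 M2 by (intro mult_left_mono) auto
      have u: "\<alpha> * (v - Bv) \<le> \<alpha> * (e + D)" using True v2 M1 by (intro mult_left_mono) (auto simp: D_def)
      have "\<alpha> * (- e - \<Phi>M) = - (\<alpha> * e) - \<alpha> * \<Phi>M" "\<alpha> * (e + D) = \<alpha> * e + \<alpha> * D" by (simp_all add: algebra_simps)
      then show ?thesis using l u aP1 aD1 ae F1 F2 by (auto simp: abs_le_iff)
    next
      case False
      then have an: "\<alpha> \<le> 0" by simp
      have l: "\<alpha> * (e + D) \<le> \<alpha> * (v - Bv)" using an v2 M1 by (intro mult_left_mono_neg) (auto simp: D_def)
      have u: "\<alpha> * (v - Bv) \<le> \<alpha> * (- e - \<Phi>M)" using an v1 M2 by (intro mult_left_mono_neg) auto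
      have "\<alpha> * (- e - \<Phi>M) = - (\<alpha> * e) - \<alpha> * \<Phi>M" "\<alpha> * (e + D) = \<alpha> * e + \<alpha> * D" by (simp_all add: algebra_simps)
      then show ?thesis using l u aP2 aD2 ae F1 F2 by (auto simp: abs_le_iff)
    qed
  qed
qed

lemma qint_big:
  fixes q :: "nat \<Rightarrow> real"
  assumes q_range: "\<forall>n\<ge>1. 0 < q n \<and> q n \<le> 1" and q_lim: "q \<longlonglongrightarrow> 1"
  shows "\<exists>n0. \<forall>n\<ge>n0. Bq \<le> qint (q n) (Suc n)"
proof -
  obtain k :: nat where k: "2 * Bq \<le> real (Suc k)"
    using reals_Archimedean2[of "2 * Bq"] by (metis less_imp_le of_nat_Suc le_add_same_cancel2 order_trans zero_le_one of_nat_0_le_iff less_eq_real_def)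
  have "(\<lambda>n. q n ^ k) \<longlonglongrightarrow> 1 ^ k" by (intro tendsto_intros q_lim)
  then have "eventually (\<lambda>n. 1 / 2 < q n ^ k) sequentially" by (intro order_tendstoD(1)) auto
  then obtain n1 where n1: "\<And>n. n \<ge> n1 \<Longrightarrow> 1 / 2 < q n ^ k" unfolding eventually_sequentially by blast
  show ?thesis
  proof (intro exI[of _ "max n1 (max k 1)"] allI impI)
    fix n assume n: "max n1 (max k 1) \<le> n"
    have qn: "0 < q n" "q n \<le> 1" using q_range n by auto
    have "Bq \<le> real (Suc k) * (1 / 2)" using k by simp
    also have "\<dots> \<le> real (Suc k) * q n ^ k" using n1[of n] n by (intro mult_left_mono) auto
    also have "\<dots> \<le> qint (q n) (Suc k)" using qint_ge_pow[of "q n" k] qn by auto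
    also have "\<dots> \<le> qint (q n) (Suc n)" using qint_mono[of "q n" "Suc k" "Suc n"] qn n by auto
    finally show "Bq \<le> qint (q n) (Suc n)" .
  qed
qed

lemma approx_uniform:
  fixes q :: "nat \<Rightarrow> real" and f0 :: "real \<Rightarrow> real"
  assumes lohi: "lo < hi" and q_range: "\<forall>n\<ge>1. 0 < q n \<and> q n \<le> 1" and q_lim: "q \<longlonglongrightarrow> 1"
    and fc: "continuous_on {lo..hi} f0" and e: "0 < \<epsilon>"
  shows "\<exists>n1. \<forall>n\<ge>n1. \<forall>y\<in>{lo..hi}. \<bar>MKZ lo hi n (q n) f0 y - f0 y\<bar> \<le> \<epsilon>"
proof -
  obtain H where hb: "\<And>z. lo \<le> z \<Longrightarrow> z \<le> hi \<Longrightarrow> \<bar>f0 z\<bar> \<le> H" using cont_bounded[OF fc] by blast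
  have H: "0 \<le> H" using hb[of lo] lohi by auto
  have "uniformly_continuous_on {lo..hi} f0" by (rule compact_uniformly_continuous[OF fc]) simp
  then obtain \<delta> where dl: "\<delta> > 0" and uc0: "\<And>u v. u \<in> {lo..hi} \<Longrightarrow> v \<in> {lo..hi} \<Longrightarrow> dist v u < \<delta> \<Longrightarrow> dist (f0 v) (f0 u) < \<epsilon> / 2"
    unfolding uniformly_continuous_on_def using e by (metis half_gt_zero)
  have uc: "\<bar>f0 u - f0 v\<bar> \<le> \<epsilon> / 2" if "lo \<le> u" "u \<le> hi" "lo \<le> v" "v \<le> hi" "\<bar>u - v\<bar> < \<delta>" for u v
    using uc0[of v u] that by (simp add: dist_real_def less_imp_le)
  define A where "A = 2 * H * (hi - lo)\<^sup>2 / \<delta>\<^sup>2"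
  have A: "0 \<le> A" using H by (simp add: A_def)
  obtain n0 where n0: "\<And>n. n \<ge> n0 \<Longrightarrow> 2 * A / \<epsilon> + 1 \<le> qint (q n) (Suc n)"
    using qint_big[OF q_range q_lim, of "2 * A / \<epsilon> + 1"] by blast
  show ?thesis
  proof (intro exI[of _ "max n0 1"] allI impI ballI)
    fix n y assume n: "max n0 1 \<le> n" and y: "y \<in> {lo..hi}"
    have qn: "0 < q n" "q n \<le> 1" using q_range n by auto
    have Q: "2 * A / \<epsilon> + 1 \<le> qint (q n) (Suc n)" using n0 n by auto
    have Qp: "0 < qint (q n) (Suc n)" using Q A e by (smt (verit) divide_nonneg_pos)
    have "\<bar>MKZ lo hi n (q n) f0 y - f0 y\<bar> \<le> \<epsilon> / 2 + 2 * H * (hi - lo)\<^sup>2 / (\<delta>\<^sup>2 * qint (q n) (Suc n))"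
      by (rule MKZ_approx[OF lohi qn _ _ _ _ dl hb uc]) (use n y e in auto)
    also have "2 * H * (hi - lo)\<^sup>2 / (\<delta>\<^sup>2 * qint (q n) (Suc n)) = A / qint (q n) (Suc n)"
      by (simp add: A_def)
    also have "A / qint (q n) (Suc n) \<le> \<epsilon> / 2"
    proof -
      have "2 * A / \<epsilon> \<le> qint (q n) (Suc n)" using Q by linarith
      then have "2 * A \<le> \<epsilon> * qint (q n) (Suc n)" using e by (simp add: divide_le_eq mult.commute)
      then show ?thesis using Qp by (simp add: divide_le_eq)
    qed
    finally show "\<bar>MKZ lo hi n (q n) f0 y - f0 y\<bar> \<le> \<epsilon>" by simp
  qed
qed

theorem theorem4p2:
  fixes x :: "nat \<Rightarrow> real" and N :: nat
    and a b :: "nat \<Rightarrow> real"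
    and \<alpha> :: "nat \<Rightarrow> real \<Rightarrow> real"
    and f :: "nat \<Rightarrow> real \<Rightarrow> real" and f0 :: "real \<Rightarrow> real"
    and q :: "nat \<Rightarrow> real"
    and C :: "nat \<Rightarrow> nat \<Rightarrow> real"
  defines "I \<equiv> {x 1..x N}"
  assumes N: "2 \<le> N"
    and part: "\<forall>i\<in>{1..<N}. x i < x (Suc i)"
    and u_left: "\<forall>i\<in>{1..N-1}. a i * x 1 + b i = x i"
    and u_right: "\<forall>i\<in>{1..N-1}. a i * x N + b i = x (i + 1)"
    and f_cont: "\<forall>k\<ge>1. continuous_on I (f k)"
    and f_pos: "\<forall>k\<ge>1. \<forall>y\<in>I. 0 \<le> f k y"
    and f0_cont: "continuous_on I f0"
    and f_conv: "\<forall>\<epsilon>>0. \<exists>K. \<forall>k\<ge>K. k \<ge> 1 \<longrightarrow> supnorm I (\<lambda>y. f k y - f0 y) < \<epsilon>"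
    and q_range: "\<forall>n\<ge>1. 0 < q n \<and> q n \<le> 1"
    and q_lim: "q \<longlonglongrightarrow> 1"
    and C_pos: "\<forall>n\<ge>1. \<forall>k\<ge>1. 0 < C n k"
    and C_gt: "\<forall>n\<ge>1. \<forall>k\<ge>1.
        max (INF y\<in>I. MKZ (x 1) (x N) n (q n) (f k) y) (supnorm I (f k)) < C n k"
    and \<alpha>_cont: "\<forall>i\<in>{1..N-1}. continuous_on I (\<alpha> i)"
    and \<alpha>_norm: "\<forall>i\<in>{1..N-1}. supnorm I (\<alpha> i) < 1"
    and \<alpha>_bounds: "\<forall>k\<ge>1. \<forall>n\<ge>1. \<forall>i\<in>{1..N-1}. \<forall>y\<in>I.
        (let \<phi>i = (INF z\<in>I. f k (a i * z + b i));
             \<Phi>i = (SUP z\<in>I. f k (a i * z + b i));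
             \<phi>M = (INF z\<in>I. MKZ (x 1) (x N) n (q n) (f k) z);
             \<Phi>M = (SUP z\<in>I. MKZ (x 1) (x N) n (q n) (f k) z);
             Cd = C n k
         in max (- \<phi>i / (Cd - \<phi>M)) (- ((Cd - \<Phi>i) / \<Phi>M)) \<le> \<alpha> i y \<and>
            \<alpha> i y \<le> min (\<phi>i / \<Phi>M) ((Cd - \<Phi>i) / (Cd - \<phi>M)))"
  shows "(\<forall>k\<ge>1. \<forall>n\<ge>1. \<forall>y\<in>I. 0 \<le> qfractal x N a b \<alpha> n (q n) (f k) y) \<and>
         (\<forall>\<epsilon>>0. \<exists>k0. \<forall>k\<ge>k0. \<forall>n\<ge>k0. k \<ge> 1 \<longrightarrow> n \<ge> 1 \<longrightarrow>
            supnorm I (\<lambda>y. qfractal x N a b \<alpha> n (q n) (f k) y - f0 y) < \<epsilon>)"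
proof -
  have x1N': "x 1 < x N" by (rule x1N[OF N part u_left u_right])
  have Ine: "x 1 \<le> x N" using x1N' by simp
  have I_def': "I = {x 1..x N}" by (simp add: I_def)
  have idx: "{1..N-1} \<noteq> {}" "finite {1..N-1}" using N by auto
  define c where "c = Max ((\<lambda>i. supnorm I (\<alpha> i)) ` {1..N-1})"
  have \<alpha>le: "\<bar>\<alpha> i y\<bar> \<le> c" if i: "i \<in> {1..N-1}" and y: "y \<in> I" for i y
  proof -
    have "\<bar>\<alpha> i y\<bar> \<le> supnorm I (\<alpha> i)" using sn_upper[of "x 1" "x N" "\<alpha> i" y] \<alpha>_cont i y by (simp add: I_def)
    also have "\<dots> \<le> c" unfolding c_def using i idx by (intro Max_ge) auto
    finally show ?thesis .
  qed
  have c1: "c < 1"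
  proof -
    have "c \<in> (\<lambda>i. supnorm I (\<alpha> i)) ` {1..N-1}" unfolding c_def using idx by (intro Max_in) auto
    then show ?thesis using \<alpha>_norm by auto
  qed
  have c0: "0 \<le> c"
  proof -
    have "1 \<in> {1..N-1}" "x 1 \<in> I" using N Ine by (auto simp: I_def)
    then show ?thesis using \<alpha>le[of 1 "x 1"] by linarith
  qed
  have \<alpha>b: "\<forall>i\<in>{1..N-1}. \<forall>y\<in>{x 1..x N}. \<bar>\<alpha> i y\<bar> \<le> c" using \<alpha>le by (simp add: I_def)
  have \<alpha>c: "\<forall>i\<in>{1..N-1}. continuous_on {x 1..x N} (\<alpha> i)" using \<alpha>_cont by (simp add: I_def)
  have fc: "continuous_on {x 1..x N} (f k)" if "k \<ge> 1" for k using f_cont that by (simp add: I_def)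
  have qn: "0 < q n" "q n \<le> 1" if "n \<ge> 1" for n using q_range that by auto
  have fb: "\<exists>H. \<forall>z. x 1 \<le> z \<longrightarrow> z \<le> x N \<longrightarrow> \<bar>f k z\<bar> \<le> H" if "k \<ge> 1" for k
    using cont_bounded[OF fc[OF that]] by metis
  have Bc: "continuous_on {x 1..x N} (MKZ (x 1) (x N) n (q n) (f k))" if "k \<ge> 1" "n \<ge> 1" for k n
    by (rule MKZ_cont[OF x1N' qn[OF that(2)] that(2) fc[OF that(1)]])
  have Bl: "MKZ (x 1) (x N) n (q n) (f k) (x 1) = f k (x 1)" if k: "k \<ge> 1" and n: "n \<ge> 1" for k n
  proof -
    obtain H where "\<forall>z. x 1 \<le> z \<longrightarrow> z \<le> x N \<longrightarrow> \<bar>f k z\<bar> \<le> H" using fb[OF k] by blast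
    then show ?thesis by (intro MKZ_left[OF x1N' qn[OF n] n]) auto
  qed
  have Br: "MKZ (x 1) (x N) n (q n) (f k) (x N) = f k (x N)" for k n by (simp add: MKZ_def)
  note ctx = N part u_left u_right
  have sol: "sol x N a b \<alpha> (f k) (MKZ (x 1) (x N) n (q n) (f k)) (qfractal x N a b \<alpha> n (q n) (f k))"
    if "k \<ge> 1" "n \<ge> 1" for k n
    by (rule the_sol[OF ctx fc[OF that(1)] Bc[OF that] Bl[OF that] Br \<alpha>c \<alpha>b c0 c1 refl])
  have part1: "0 \<le> qfractal x N a b \<alpha> n (q n) (f k) y" if k: "k \<ge> 1" and n: "n \<ge> 1" and y: "y \<in> I" for k n y
  proof -
    obtain H where H: "\<And>z. x 1 \<le> z \<Longrightarrow> z \<le> x N \<Longrightarrow> \<bar>f k z\<bar> \<le> H" using fb[OF k] by blast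
    define M where "M = MKZ (x 1) (x N) n (q n) (f k)"
    obtain HM where HM: "\<And>z. x 1 \<le> z \<Longrightarrow> z \<le> x N \<Longrightarrow> \<bar>M z\<bar> \<le> HM"
      using cont_bounded[OF Bc[OF k n]] unfolding M_def by blast
    have fpos: "\<And>z. x 1 \<le> z \<Longrightarrow> z \<le> x N \<Longrightarrow> 0 \<le> f k z" using f_pos k by (auto simp: I_def)
    have Mpos: "0 \<le> M z" if "z \<in> I" for z
      unfolding M_def using that by (intro MKZ_nonneg[OF x1N' qn[OF n] n _ _ H fpos]) (auto simp: I_def)
    have bM: "bdd_below (M ` I)" "bdd_above (M ` I)"
    proof -
      show "bdd_below (M ` I)" by (rule bdd_belowI[where m="-HM"]) (use HM in \<open>force simp: I_def abs_le_iff\<close>)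
      show "bdd_above (M ` I)" by (rule bdd_aboveI[where M="HM"]) (use HM in \<open>force simp: I_def abs_le_iff\<close>)
    qed
    have C1: "supnorm I (f k) < C n k" "(INF z\<in>I. M z) < C n k" using C_gt k n by (auto simp: M_def)
    have \<phi>M0: "0 \<le> (INF z\<in>I. M z)" using Ine Mpos by (intro cINF_greatest) (auto simp: I_def)
    have step: "-(c * e) \<le> f k (a i * y + b i) + \<alpha> i y * (v - M y) \<and> f k (a i * y + b i) + \<alpha> i y * (v - M y) \<le> C n k + c * e"
      if i: "i \<in> {1..N-1}" and y: "y \<in> {x 1..x N}" and e: "0 \<le> e" and v: "-e \<le> v" "v \<le> C n k + e" for i y e v
    proof -
      have uI: "a i * z + b i \<in> {x 1..x N}" if "z \<in> {x 1..x N}" for z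
        by (rule u_range(2)[OF ctx i that])
      define F where "F z = f k (a i * z + b i)" for z
      have Hb: "\<bar>F z\<bar> \<le> H" if "z \<in> I" for z using H uI[of z] that by (auto simp: F_def I_def)
      have bF: "bdd_below (F ` I)" "bdd_above (F ` I)"
      proof -
        show "bdd_below (F ` I)" by (rule bdd_belowI[where m="-H"]) (use Hb in \<open>force simp: abs_le_iff\<close>)
        show "bdd_above (F ` I)" by (rule bdd_aboveI[where M="H"]) (use Hb in \<open>force simp: abs_le_iff\<close>)
      qed
      have yI: "y \<in> I" using y by (simp add: I_def)
      have Fy0: "0 \<le> F y" using fpos uI[OF y] by (auto simp: F_def)
      have F1: "(INF z\<in>I. F z) \<le> F y" by (rule cINF_lower[OF bF(1) yI])
      have F2: "F y \<le> (SUP z\<in>I. F z)" by (rule cSUP_upper[OF yI bF(2)])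
      have F3: "(SUP z\<in>I. F z) \<le> supnorm I (f k)"
      proof (rule cSUP_least)
        show "I \<noteq> {}" using Ine by (simp add: I_def)
        fix z assume z: "z \<in> I"
        have "\<bar>f k (a i * z + b i)\<bar> \<le> supnorm I (f k)"
          using sn_upper[OF fc[OF k] uI] z by (simp add: I_def)
        then show "F z \<le> supnorm I (f k)" by (simp add: F_def)
      qed
      have M1: "(INF z\<in>I. M z) \<le> M y" by (rule cINF_lower[OF bM(1) yI])
      have M2: "M y \<le> (SUP z\<in>I. M z)" by (rule cSUP_upper[OF yI bM(2)])
      have ab: "max (- (INF z\<in>I. F z) / (C n k - (INF z\<in>I. M z))) (- ((C n k - (SUP z\<in>I. F z)) / (SUP z\<in>I. M z))) \<le> \<alpha> i y \<and>
            \<alpha> i y \<le> min ((INF z\<in>I. F z) / (SUP z\<in>I. M z)) ((C n k - (SUP z\<in>I. F z)) / (C n k - (INF z\<in>I. M z)))"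
        using \<alpha>_bounds k n i yI unfolding F_def M_def Let_def by blast
      have "-(c * e) \<le> F y + \<alpha> i y * (v - M y) \<and> F y + \<alpha> i y * (v - M y) \<le> C n k + c * e"
        by (rule pos_step[OF Fy0 F1 F2 _ \<phi>M0 M1 M2 C1(2) e v \<alpha>le[OF i yI] conjunct1[OF ab] conjunct2[OF ab]])
           (use F3 C1(1) in linarith)
      then show ?thesis by (simp add: F_def)
    qed
    have "0 \<le> qfractal x N a b \<alpha> n (q n) (f k) y \<and> qfractal x N a b \<alpha> n (q n) (f k) y \<le> C n k"
      by (rule sol_range[OF ctx fc[OF k] Bc[OF k n] Bl[OF k n] Br \<alpha>c \<alpha>b c0 c1 sol[OF k n], folded M_def, OF step])
         (use y in \<open>simp_all add: I_def\<close>)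
    then show ?thesis by simp
  qed
  have part2: "\<exists>k0. \<forall>k\<ge>k0. \<forall>n\<ge>k0. k \<ge> 1 \<longrightarrow> n \<ge> 1 \<longrightarrow>
            supnorm I (\<lambda>y. qfractal x N a b \<alpha> n (q n) (f k) y - f0 y) < \<epsilon>" if e: "\<epsilon> > 0" for \<epsilon>
  proof -
    define e' where "e' = \<epsilon> * (1 - c) / 8"
    have e': "0 < e'" using e c1 by (simp add: e'_def)
    obtain K1 where K1: "\<And>k. k \<ge> K1 \<Longrightarrow> k \<ge> 1 \<Longrightarrow> supnorm I (\<lambda>y. f k y - f0 y) < e'"
      using f_conv e' by blast
    obtain n1 where n1: "\<And>n y. n \<ge> n1 \<Longrightarrow> y \<in> {x 1..x N} \<Longrightarrow> \<bar>MKZ (x 1) (x N) n (q n) f0 y - f0 y\<bar> \<le> e'"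
    proof -
      have "continuous_on {x 1..x N} f0" using f0_cont by (simp add: I_def)
      from approx_uniform[OF x1N' q_range q_lim this e'] that show ?thesis by blast
    qed
    obtain H0 where H0: "\<And>z. x 1 \<le> z \<Longrightarrow> z \<le> x N \<Longrightarrow> \<bar>f0 z\<bar> \<le> H0"
      using cont_bounded[of "x 1" "x N" f0] f0_cont by (auto simp: I_def)
    show ?thesis
    proof (intro exI[of _ "max (max K1 n1) 1"] allI impI)
      fix k n assume k: "max (max K1 n1) 1 \<le> k" and n: "max (max K1 n1) 1 \<le> n"
      have k1: "k \<ge> 1" and n1': "n \<ge> 1" using k n by auto
      define g where "g = qfractal x N a b \<alpha> n (q n) (f k)"
      have dk: "\<bar>f k y - f0 y\<bar> \<le> e'" if "y \<in> {x 1..x N}" for y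
      proof -
        have "continuous_on {x 1..x N} (\<lambda>y. f k y - f0 y)" using fc[OF k1] f0_cont by (intro continuous_intros) (auto simp: I_def)
        then have "\<bar>f k y - f0 y\<bar> \<le> supnorm I (\<lambda>y. f k y - f0 y)" using sn_upper that by (simp add: I_def)
        also have "\<dots> < e'" using K1 k by auto
        finally show ?thesis by simp
      qed
      obtain Hk where Hk: "\<forall>z. x 1 \<le> z \<longrightarrow> z \<le> x N \<longrightarrow> \<bar>f k z\<bar> \<le> Hk" using fb[OF k1] by blast
      define HH where "HH = max Hk H0"
      have E: "\<bar>f k y - MKZ (x 1) (x N) n (q n) (f k) y\<bar> \<le> 3 * e'" if y: "y \<in> {x 1..x N}" for y
      proof -
        have a1: "\<bar>MKZ (x 1) (x N) n (q n) f0 y - MKZ (x 1) (x N) n (q n) (f k) y\<bar> \<le> e'"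
        proof (rule MKZ_diff[OF x1N' qn[OF n1'] n1'])
          show "x 1 \<le> y" "y \<le> x N" using y by auto
          show "\<bar>f0 z\<bar> \<le> HH" if "x 1 \<le> z" "z \<le> x N" for z using H0[OF that] by (simp add: HH_def)
          show "\<bar>f k z\<bar> \<le> HH" if "x 1 \<le> z" "z \<le> x N" for z
          proof -
            have "\<bar>f k z\<bar> \<le> Hk" using Hk that by blast
            then show ?thesis by (simp add: HH_def)
          qed
          show "\<bar>f0 z - f k z\<bar> \<le> e'" if "x 1 \<le> z" "z \<le> x N" for z using dk[of z] that by (simp add: abs_minus_commute)
        qed
        have a2: "\<bar>MKZ (x 1) (x N) n (q n) f0 y - f0 y\<bar> \<le> e'" using n1 n y by auto
        show ?thesis using a1 a2 dk[OF y] by linarith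
      qed
      have gb: "\<bar>g z - f0 z\<bar> \<le> \<epsilon> / 2" if z: "z \<in> {x 1..x N}" for z
      proof -
        have "\<bar>g z - f k z\<bar> \<le> c * (3 * e') / (1 - c)"
          unfolding g_def by (rule sol_bound[OF ctx fc[OF k1] Bc[OF k1 n1'] Bl[OF k1 n1'] Br \<alpha>c \<alpha>b c0 c1 sol[OF k1 n1'] E z])
        also have "\<dots> \<le> 3 * e' / (1 - c)" using c1 e' c0 by (intro divide_right_mono) (auto simp: mult_left_le_one_le)
        finally have A: "\<bar>g z - f0 z\<bar> \<le> 3 * e' / (1 - c) + e'" using dk[OF z] by linarith
        have B: "e' \<le> e' / (1 - c)" using c0 c1 e' by (simp add: le_divide_eq)
        have C: "3 * e' / (1 - c) + e' / (1 - c) = 4 * e' / (1 - c)" by (simp add: add_divide_distrib[symmetric])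
        have "\<bar>g z - f0 z\<bar> \<le> 4 * e' / (1 - c)" using A B C by linarith
        also have "\<dots> = \<epsilon> / 2" using c1 by (simp add: e'_def field_simps)
        finally show ?thesis .
      qed
      have "supnorm I (\<lambda>y. g y - f0 y) \<le> \<epsilon> / 2" unfolding I_def by (rule sn_le[OF Ine gb])
      then show "supnorm I (\<lambda>y. qfractal x N a b \<alpha> n (q n) (f k) y - f0 y) < \<epsilon>" using e by (simp add: g_def)
    qed
  qed
  show ?thesis using part1 part2 by blast
qed

end
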